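(* For every natural number $k\ge 2$, the class $\mathcal{H}_k$ is closed under taking minors: if $H\in\mathcal{H}_k$ and $G$ is a minor of $H$, then $G\in\mathcal{H}_k$.
   Context: All graphs are finite; parallel edges are allowed, loops are not. A length-function on a graph $G$ is a map $\ell:E(G)\to\mathbb{R}^+$ (strictly positive reals); $\ell(H)=\sum_{e\in E(H)}\ell(e)$ for subgraphs $H$, which carry the restricted length-function. $\mathrm{sd}_G(A)$ is the minimum of $\ell(S)$ over connected subgraphs $S\subseteq G$ with $A\subseteq V(S)$ ($\infty$ if none). $H\subseteq G$ is $k$-geodesic in $G$ if $\mathrm{sd}_H(A)=\mathrm{sd}_G(A)$ for all $A\subseteq V(H)$ with $|A|\le k$, and fully geodesic if it is $k$-geodesic for all $k$. For $k\ge2$, $\mathcal{H}_k$ is the class of all graphs $H$ such that for every graph $G\supseteq H$ and every length-function on $G$ for which $H$ is $k$-geodesic in $G$, $H$ is fully geodesic in $G$. *)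

theory Defs
  imports Complex_Main "HOL-Library.Extended_Real"
begin

text \<open>Finite multigraphs (parallel edges allowed, no loops). A graph is given by a
vertex set, an edge set and a map assigning to each edge its set of two end-vertices.\<close>

record ('v, 'e) mgraph =
  verts :: "'v set"
  edges :: "'e set"
  ends  :: "'e \<Rightarrow> 'v set"

definition graph :: "('v, 'e) mgraph \<Rightarrow> bool" where
  "graph G \<longleftrightarrow> finite (verts G) \<and> finite (edges G) \<and>
     (\<forall>e\<in>edges G. ends G e \<subseteq> verts G \<and> card (ends G e) = 2)"

definition subgraph :: "('v, 'e) mgraph \<Rightarrow> ('v, 'e) mgraph \<Rightarrow> bool" where
  "subgraph S G \<longleftrightarrow> graph S \<and> verts S \<subseteq> verts G \<and> edges S \<subseteq> edges G \<and>
     (\<forall>e\<in>edges S. ends S e = ends G e)"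

definition adj :: "('v, 'e) mgraph \<Rightarrow> 'v \<Rightarrow> 'v \<Rightarrow> bool" where
  "adj G u v \<longleftrightarrow> (\<exists>e\<in>edges G. ends G e = {u, v})"

definition connected_graph :: "('v, 'e) mgraph \<Rightarrow> bool" where
  "connected_graph G \<longleftrightarrow> (\<forall>u\<in>verts G. \<forall>v\<in>verts G. (adj G)\<^sup>*\<^sup>* u v)"

definition induced :: "('v, 'e) mgraph \<Rightarrow> 'v set \<Rightarrow> ('v, 'e) mgraph" where
  "induced G B = \<lparr>verts = B, edges = {e \<in> edges G. ends G e \<subseteq> B}, ends = ends G\<rparr>"

definition glength :: "('e \<Rightarrow> real) \<Rightarrow> ('v, 'e) mgraph \<Rightarrow> real" where
  "glength l S = (\<Sum>e\<in>edges S. l e)"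

text \<open>Steiner distance; the infimum of the empty set in ereal is \<infinity>.\<close>
definition sd :: "('v, 'e) mgraph \<Rightarrow> ('e \<Rightarrow> real) \<Rightarrow> 'v set \<Rightarrow> ereal" where
  "sd G l A = Inf {ereal (glength l S) | S. subgraph S G \<and> connected_graph S \<and> A \<subseteq> verts S}"

definition length_function :: "('v, 'e) mgraph \<Rightarrow> ('e \<Rightarrow> real) \<Rightarrow> bool" where
  "length_function G l \<longleftrightarrow> (\<forall>e\<in>edges G. l e > 0)"

definition k_geodesic :: "nat \<Rightarrow> ('v, 'e) mgraph \<Rightarrow> ('e \<Rightarrow> real) \<Rightarrow> ('v, 'e) mgraph \<Rightarrow> bool" where
  "k_geodesic k G l H \<longleftrightarrow> (\<forall>A. A \<subseteq> verts H \<and> card A \<le> k \<longrightarrow> sd H l A = sd G l A)"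

definition fully_geodesic :: "('v, 'e) mgraph \<Rightarrow> ('e \<Rightarrow> real) \<Rightarrow> ('v, 'e) mgraph \<Rightarrow> bool" where
  "fully_geodesic G l H \<longleftrightarrow> (\<forall>k. k_geodesic k G l H)"

text \<open>The class H_k. Graphs are labelled by natural numbers (vertices and edges), so that
every finite graph has an isomorphic copy and every finite supergraph can be realised.\<close>
definition in_H :: "nat \<Rightarrow> (nat, nat) mgraph \<Rightarrow> bool" where
  "in_H k H \<longleftrightarrow> graph H \<and>
     (\<forall>G l. graph G \<and> subgraph H G \<and> length_function G l \<and> k_geodesic k G l H
        \<longrightarrow> fully_geodesic G l H)"

text \<open>G is a minor of H (up to isomorphism): there are disjoint nonempty connected branch
sets B v in H for the vertices v of G, and an injective assignment of the edges of G to
edges of H joining the corresponding branch sets.\<close>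
definition minor :: "('v, 'e) mgraph \<Rightarrow> ('w, 'f) mgraph \<Rightarrow> bool" where
  "minor G H \<longleftrightarrow> graph G \<and> graph H \<and>
     (\<exists>(B :: 'v \<Rightarrow> 'w set) (f :: 'e \<Rightarrow> 'f).
        (\<forall>v\<in>verts G. B v \<noteq> {} \<and> B v \<subseteq> verts H \<and> connected_graph (induced H (B v))) \<and>
        (\<forall>u\<in>verts G. \<forall>v\<in>verts G. u \<noteq> v \<longrightarrow> B u \<inter> B v = {}) \<and>
        inj_on f (edges G) \<and>
        (\<forall>e\<in>edges G. f e \<in> edges H \<and>
           (\<exists>u v a b. ends G e = {u, v} \<and> ends H (f e) = {a, b} \<and> a \<in> B u \<and> b \<in> B v)))"

end

theory Submission
  imports Defs
begin

definition mk :: "('v,'e) mgraph \<Rightarrow> 'v set \<Rightarrow> 'e set \<Rightarrow> ('v,'e) mgraph" where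
  "mk G V E = \<lparr>verts = V, edges = E, ends = ends G\<rparr>"

definition csub :: "('v,'e) mgraph \<Rightarrow> 'v set \<Rightarrow> 'e set \<Rightarrow> bool" where
  "csub G V E \<longleftrightarrow> V \<subseteq> verts G \<and> E \<subseteq> edges G \<and> (\<forall>e\<in>E. ends G e \<subseteq> V) \<and>
     (\<forall>u\<in>V. \<forall>w\<in>V. (adj (mk G V E))\<^sup>*\<^sup>* u w)"

lemma adj_mk: "adj (mk G V E) u w \<longleftrightarrow> (\<exists>e\<in>E. ends G e = {u,w})"
  by (simp add: adj_def mk_def)

lemma adj_sym: "adj G u w \<Longrightarrow> adj G w u"
  unfolding adj_def by (auto simp: insert_commute)

lemma rtranclp_adj_sym: "(adj G)\<^sup>*\<^sup>* u w \<Longrightarrow> (adj G)\<^sup>*\<^sup>* w u"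
proof (induction rule: rtranclp_induct)
  case base then show ?case by simp
next
  case (step y z)
  then show ?case using adj_sym[OF step(2)] by (meson converse_rtranclp_into_rtranclp)
qed

lemma adj_mk_mono: "E \<subseteq> E2 \<Longrightarrow> (adj (mk G V E))\<^sup>*\<^sup>* u w \<Longrightarrow> (adj (mk G V2 E2))\<^sup>*\<^sup>* u w"
proof -
  assume a: "E \<subseteq> E2" "(adj (mk G V E))\<^sup>*\<^sup>* u w"
  have "adj (mk G V E) \<le> adj (mk G V2 E2)" using a(1) unfolding le_fun_def le_bool_def adj_mk by blast
  then show ?thesis using a(2) rtranclp_mono by (metis predicate2D)
qed

lemma adj_mk_le: "E \<subseteq> edges G \<Longrightarrow> (adj (mk G V E))\<^sup>*\<^sup>* u w \<Longrightarrow> (adj G)\<^sup>*\<^sup>* u w"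
proof -
  assume a: "E \<subseteq> edges G" "(adj (mk G V E))\<^sup>*\<^sup>* u w"
  have "adj (mk G V E) \<le> adj G" using a(1) unfolding le_fun_def le_bool_def adj_def mk_def by auto
  then show ?thesis using a(2) rtranclp_mono by (metis predicate2D)
qed

lemma csub_rtranclp: "csub G V E \<Longrightarrow> u \<in> V \<Longrightarrow> w \<in> V \<Longrightarrow> (adj G)\<^sup>*\<^sup>* u w"
  unfolding csub_def by (meson adj_mk_le)

lemma csub_finite: "graph G \<Longrightarrow> csub G V E \<Longrightarrow> finite V \<and> finite E"
  unfolding graph_def csub_def by (meson finite_subset)

lemma csub_subgraph: "graph G \<Longrightarrow> csub G V E \<Longrightarrow> subgraph (mk G V E) G \<and> connected_graph (mk G V E)"
  unfolding subgraph_def connected_graph_def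
  using csub_finite[of G V E]
  by (auto simp: csub_def graph_def mk_def)

lemma sd_le_csub: "graph G \<Longrightarrow> csub G V E \<Longrightarrow> A \<subseteq> V \<Longrightarrow> sd G l A \<le> ereal (sum l E)"
  unfolding sd_def
  apply (rule Inf_lower)
  using csub_subgraph[of G V E] by (force simp: glength_def mk_def)

lemma subgraph_csub:
  assumes "subgraph S G" "connected_graph S"
  shows "csub G (verts S) (edges S)"
proof -
  have eq: "adj (mk G (verts S) (edges S)) = adj S"
    using assms(1) unfolding subgraph_def by (auto simp: adj_def mk_def fun_eq_iff)
  have e: "\<forall>e\<in>edges S. ends G e \<subseteq> verts S"
    using assms(1) unfolding subgraph_def graph_def by blast
  have s: "verts S \<subseteq> verts G" "edges S \<subseteq> edges G" using assms(1) unfolding subgraph_def by auto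
  have c: "\<forall>u\<in>verts S. \<forall>w\<in>verts S. (adj S)\<^sup>*\<^sup>* u w" using assms(2) unfolding connected_graph_def by auto
  show ?thesis unfolding csub_def eq using e s c by blast
qed

lemma sd_ge_csub:
  assumes "\<And>V E. csub G V E \<Longrightarrow> A \<subseteq> V \<Longrightarrow> x \<le> ereal (sum l E)"
  shows "x \<le> sd G l A"
  unfolding sd_def
proof (rule Inf_greatest)
  fix y assume "y \<in> {ereal (glength l S) |S. subgraph S G \<and> connected_graph S \<and> A \<subseteq> verts S}"
  then obtain S where "y = ereal (glength l S)" "subgraph S G" "connected_graph S" "A \<subseteq> verts S" by blast
  then show "x \<le> y" using assms[OF subgraph_csub] by (simp add: glength_def)
qed

lemma sd_attain:
  assumes "graph G" "sd G l A \<noteq> \<infinity>"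
  shows "\<exists>V E. csub G V E \<and> A \<subseteq> V \<and> sd G l A = ereal (sum l E)"
proof -
  let ?M = "{ereal (glength l S) |S. subgraph S G \<and> connected_graph S \<and> A \<subseteq> verts S}"
  have "?M \<subseteq> (\<lambda>E. ereal (sum l E)) ` Pow (edges G)"
    by (auto simp: glength_def subgraph_def)
  moreover have "finite (Pow (edges G))" using assms(1) by (simp add: graph_def)
  ultimately have fin: "finite ?M" using finite_subset by blast
  have ne: "?M \<noteq> {}"
  proof
    assume e: "?M = {}"
    have "sd G l A = Inf ?M" by (simp add: sd_def)
    then have "sd G l A = Inf {}" unfolding e .
    then show False using assms(2) by (simp add: top_ereal_def)
  qed
  have "Inf ?M \<in> ?M" using Min_Inf[OF fin ne] Min_in[OF fin ne] by simp
  then obtain S where S: "sd G l A = ereal (glength l S)" "subgraph S G" "connected_graph S" "A \<subseteq> verts S"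
    unfolding sd_def by auto
  then show ?thesis using subgraph_csub[OF S(2,3)] by (auto simp: glength_def)
qed

lemma csub_mono: "subgraph G G2 \<Longrightarrow> csub G V E \<Longrightarrow> csub G2 V E"
proof -
  assume a: "subgraph G G2" "csub G V E"
  have eq: "\<forall>e\<in>E. ends G2 e = ends G e" using a unfolding subgraph_def csub_def by auto
  have "adj (mk G2 V E) u w = adj (mk G V E) u w" for u w
    unfolding adj_mk by (rule bex_cong[OF refl]) (simp add: eq)
  then have "adj (mk G2 V E) = adj (mk G V E)" by (simp add: fun_eq_iff)
  moreover have "\<forall>e\<in>E. ends G2 e \<subseteq> V" using a eq unfolding csub_def by auto
  ultimately show ?thesis using a unfolding csub_def subgraph_def by auto
qed

lemma csub_single: "v \<in> verts G \<Longrightarrow> csub G {v} {}"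
  by (simp add: csub_def)

lemma csub_edge:
  assumes "graph G" "e \<in> edges G"
  shows "csub G (ends G e) {e}"
proof -
  have "card (ends G e) = 2" "ends G e \<subseteq> verts G" using assms unfolding graph_def by auto
  then obtain a b where ab: "ends G e = {a,b}" by (meson card_2_iff)
  have r1: "(adj (mk G (ends G e) {e}))\<^sup>*\<^sup>* a b" using ab by (auto simp: adj_mk)
  have r2: "(adj (mk G (ends G e) {e}))\<^sup>*\<^sup>* b a" using rtranclp_adj_sym[OF r1] .
  show ?thesis unfolding csub_def using assms \<open>ends G e \<subseteq> verts G\<close> r1 r2 ab by auto
qed

lemma csub_union:
  assumes "csub G V1 E1" "csub G V2 E2" "x \<in> V1" "x \<in> V2"
  shows "csub G (V1 \<union> V2) (E1 \<union> E2)"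
proof -
  let ?R = "(adj (mk G (V1 \<union> V2) (E1 \<union> E2)))\<^sup>*\<^sup>*"
  have h1: "?R u w" if "u \<in> V1" "w \<in> V1" for u w
  proof -
    have "(adj (mk G V1 E1))\<^sup>*\<^sup>* u w" using assms(1) that unfolding csub_def by simp
    then show ?thesis by (rule adj_mk_mono[rotated]) auto
  qed
  have h2: "?R u w" if "u \<in> V2" "w \<in> V2" for u w
  proof -
    have "(adj (mk G V2 E2))\<^sup>*\<^sup>* u w" using assms(2) that unfolding csub_def by simp
    then show ?thesis by (rule adj_mk_mono[rotated]) auto
  qed
  have "?R u w" if "u \<in> V1 \<union> V2" "w \<in> V1 \<union> V2" for u w
  proof -
    have "?R u x" using that(1) h1 h2 assms(3,4) by auto
    moreover have "?R x w" using that(2) h1 h2 assms(3,4) by auto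
    ultimately show ?thesis by (rule rtranclp_trans)
  qed
  then show ?thesis using assms unfolding csub_def by auto
qed

lemma csub_closed:
  assumes "csub G V E" "\<forall>e\<in>edges G. ends G e \<inter> X \<noteq> {} \<longrightarrow> ends G e \<subseteq> X" "v \<in> V" "v \<in> X"
  shows "V \<subseteq> X"
proof
  fix w assume "w \<in> V"
  then have "(adj (mk G V E))\<^sup>*\<^sup>* v w" using assms unfolding csub_def by blast
  then show "w \<in> X"
  proof (induction rule: rtranclp_induct)
    case base then show ?case using assms by simp
  next
    case (step y z)
    then obtain e where e: "e \<in> E" "ends G e = {y,z}" by (auto simp: adj_mk)
    then have "e \<in> edges G" using assms(1) unfolding csub_def by blast
    then have "ends G e \<inter> X \<noteq> {} \<longrightarrow> ends G e \<subseteq> X" using assms(2) by blast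
    moreover have "y \<in> ends G e" using e by simp
    ultimately show ?case using step.IH e(2) by blast
  qed
qed

lemma adj_verts: "graph G \<Longrightarrow> adj G u w \<Longrightarrow> u \<in> verts G \<and> w \<in> verts G"
  unfolding graph_def adj_def by blast

lemma rtranclp_verts:
  assumes "graph G" "x0 \<in> verts G" "(adj G)\<^sup>*\<^sup>* x0 y" shows "y \<in> verts G"
  using assms(3) by (induction rule: rtranclp_induct) (auto dest: adj_verts[OF assms(1)] simp: assms(2))

lemma component_csub:
  assumes "graph G" "x0 \<in> verts G"
  defines "C \<equiv> {y. (adj G)\<^sup>*\<^sup>* x0 y}"
  shows "csub G C {e\<in>edges G. ends G e \<subseteq> C}"
proof -
  let ?R = "(adj (mk G C {e\<in>edges G. ends G e \<subseteq> C}))\<^sup>*\<^sup>*"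
  have a: "?R x0 y" if "(adj G)\<^sup>*\<^sup>* x0 y" for y
    using that
  proof (induction rule: rtranclp_induct)
    case base then show ?case by simp
  next
    case (step y z)
    then obtain e where e: "e \<in> edges G" "ends G e = {y,z}" by (auto simp: adj_def)
    have "z \<in> C" "y \<in> C" using step unfolding C_def by auto
    then have "adj (mk G C {e\<in>edges G. ends G e \<subseteq> C}) y z" using e by (auto simp: adj_mk)
    then show ?case using step by (meson rtranclp.rtrancl_into_rtrancl)
  qed
  have "?R u w" if "u \<in> C" "w \<in> C" for u w
  proof -
    have "?R u x0" using rtranclp_adj_sym[OF a[of u]] that by (simp add: C_def)
    moreover have "?R x0 w" using a[of w] that by (simp add: C_def)
    ultimately show ?thesis by (rule rtranclp_trans)
  qed
  moreover have "C \<subseteq> verts G" using rtranclp_verts[OF assms(1,2)] unfolding C_def by blast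
  ultimately show ?thesis unfolding csub_def by auto
qed

lemma sd_nonneg: "(\<forall>e\<in>edges G. 0 \<le> l e) \<Longrightarrow> 0 \<le> sd G l A"
  by (rule sd_ge_csub) (auto simp: csub_def intro!: sum_nonneg)

lemma sum_union_le:
  fixes l :: "'a \<Rightarrow> real"
  assumes "finite I" "\<forall>i\<in>I. finite (F i)" "\<forall>i\<in>I. \<forall>x\<in>F i. 0 \<le> l x"
  shows "sum l (\<Union>i\<in>I. F i) \<le> (\<Sum>i\<in>I. sum l (F i))"
  using assms
proof (induction I rule: finite_induct)
  case empty then show ?case by simp
next
  case (insert i I)
  let ?U = "\<Union>i\<in>I. F i"
  have fu: "finite ?U" using insert by auto
  have "sum l (F i \<union> ?U) + sum l (F i \<inter> ?U) = sum l (F i) + sum l ?U"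
    using sum.union_inter[of "F i" ?U l] insert fu by blast
  moreover have "0 \<le> sum l (F i \<inter> ?U)" using insert by (intro sum_nonneg) auto
  moreover have "sum l ?U \<le> (\<Sum>i\<in>I. sum l (F i))" using insert by auto
  ultimately show ?case using insert by simp
qed

lemma sum_un_le:
  fixes l :: "'a \<Rightarrow> real"
  assumes "finite A" "finite B" "\<forall>x\<in>A\<inter>B. 0 \<le> l x"
  shows "sum l (A \<union> B) \<le> sum l A + sum l B"
proof -
  have "sum l (A \<union> B) + sum l (A \<inter> B) = sum l A + sum l B" by (rule sum.union_inter[OF assms(1,2)])
  moreover have "0 \<le> sum l (A \<inter> B)" using assms(3) by (intro sum_nonneg) auto
  ultimately show ?thesis by linarith
qed

lemma proj:
  fixes S :: "('a,'b) mgraph" and K :: "('v,'e) mgraph" and l :: "'e \<Rightarrow> real"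
  assumes K: "graph K" and fS: "finite (verts S)" "finite (edges S)"
   and endsS: "\<forall>g\<in>edges S. ends S g \<subseteq> verts S \<and> ends S g \<noteq> {}"
   and conS: "\<forall>u\<in>verts S. \<forall>w\<in>verts S. (adj S)\<^sup>*\<^sup>* u w"
   and R: "\<forall>x\<in>verts S. csub K (RV x) (RE x) \<and> p x \<in> RV x"
   and Q: "\<forall>g\<in>edges S. csub K (QV g) (QE g) \<and> p ` ends S g \<subseteq> QV g"
   and nn: "\<forall>e\<in>edges K. 0 \<le> l e"
  shows "csub K ((\<Union>x\<in>verts S. RV x) \<union> (\<Union>g\<in>edges S. QV g)) ((\<Union>x\<in>verts S. RE x) \<union> (\<Union>g\<in>edges S. QE g))
     \<and> sum l ((\<Union>x\<in>verts S. RE x) \<union> (\<Union>g\<in>edges S. QE g)) \<le> (\<Sum>x\<in>verts S. sum l (RE x)) + (\<Sum>g\<in>edges S. sum l (QE g))"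
proof -
  define UV where "UV = (\<Union>x\<in>verts S. RV x) \<union> (\<Union>g\<in>edges S. QV g)"
  define UE where "UE = (\<Union>x\<in>verts S. RE x) \<union> (\<Union>g\<in>edges S. QE g)"
  let ?R = "(adj (mk K UV UE))\<^sup>*\<^sup>*"
  have piece: "?R u w" if "csub K V' E'" "E' \<subseteq> UE" "u \<in> V'" "w \<in> V'" for V' E' u w
    using that adj_mk_mono[of E' UE K V' u w UV] unfolding csub_def by blast
  have Rc: "RV x \<subseteq> verts K \<and> RE x \<subseteq> edges K \<and> (\<forall>e\<in>RE x. ends K e \<subseteq> RV x)" if "x \<in> verts S" for x
    using R that unfolding csub_def by simp
  have Qc: "QV g \<subseteq> verts K \<and> QE g \<subseteq> edges K \<and> (\<forall>e\<in>QE g. ends K e \<subseteq> QV g)" if "g \<in> edges S" for g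
    using Q that unfolding csub_def by simp
  have sub1: "UV \<subseteq> verts K" "UE \<subseteq> edges K" "\<forall>e\<in>UE. ends K e \<subseteq> UV"
  proof -
    show "UV \<subseteq> verts K" unfolding UV_def by (auto dest!: Rc Qc)
    show "UE \<subseteq> edges K" unfolding UE_def by (auto dest!: Rc Qc)
    show "\<forall>e\<in>UE. ends K e \<subseteq> UV"
    proof
      fix e assume "e \<in> UE"
      then consider x where "x \<in> verts S" "e \<in> RE x" | g where "g \<in> edges S" "e \<in> QE g"
        unfolding UE_def by blast
      then show "ends K e \<subseteq> UV"
      proof cases
        case 1 then show ?thesis using Rc[OF 1(1)] unfolding UV_def by blast
      next
        case 2 then show ?thesis using Qc[OF 2(1)] unfolding UV_def by blast
      qed
    qed
  qed
  have con: "?R u w" if "u \<in> UV" "w \<in> UV" for u w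
  proof (cases "verts S = {}")
    case True
    then have "edges S = {}" using endsS by blast
    then show ?thesis using that True unfolding UV_def by simp
  next
    case False
    then obtain s0 where s0: "s0 \<in> verts S" by blast
    have pv: "?R (p s0) (p y)" if "(adj S)\<^sup>*\<^sup>* s0 y" for y
      using that
    proof (induction rule: rtranclp_induct)
      case base then show ?case by simp
    next
      case (step y z)
      then obtain g where g: "g \<in> edges S" "ends S g = {y,z}" by (auto simp: adj_def)
      have q: "csub K (QV g) (QE g)" "p y \<in> QV g" "p z \<in> QV g" using Q g by auto
      have "QE g \<subseteq> UE" unfolding UE_def using g by blast
      then have "?R (p y) (p z)" using piece[OF q(1) _ q(2,3)] by blast
      then show ?case using step by (meson rtranclp_trans)
    qed
    have all: "?R (p s0) z" if "z \<in> UV" for z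
    proof -
      from that consider (a) x where "x \<in> verts S" "z \<in> RV x" | (b) g where "g \<in> edges S" "z \<in> QV g"
        unfolding UV_def by blast
      then show ?thesis
      proof cases
        case a
        have "RE x \<subseteq> UE" unfolding UE_def using a by blast
        then have "?R (p x) z" using R piece[of "RV x" "RE x"] a by auto
        moreover have "?R (p s0) (p x)" using pv conS s0 a by blast
        ultimately show ?thesis by (meson rtranclp_trans)
      next
        case b
        then obtain x where x: "x \<in> ends S g" using endsS by blast
        then have "x \<in> verts S" using endsS b by blast
        have "QE g \<subseteq> UE" unfolding UE_def using b by blast
        moreover have "csub K (QV g) (QE g)" "p x \<in> QV g" using Q b x by auto
        ultimately have "?R (p x) z" using piece[of "QV g" "QE g"] b by blast
        moreover have "?R (p s0) (p x)" using pv conS s0 \<open>x \<in> verts S\<close> by blast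
        ultimately show ?thesis by (meson rtranclp_trans)
      qed
    qed
    have "?R u (p s0)" using all[OF that(1)] rtranclp_adj_sym by fast
    then show ?thesis using all[OF that(2)] by (meson rtranclp_trans)
  qed
  have cs: "csub K UV UE" using sub1 con unfolding csub_def by blast
  have finR: "\<forall>x\<in>verts S. finite (RE x)" and finQ: "\<forall>g\<in>edges S. finite (QE g)"
    using R Q csub_finite[OF K] by blast+
  have nnR: "\<forall>x\<in>verts S. \<forall>e\<in>RE x. 0 \<le> l e" using R nn unfolding csub_def by blast
  have nnQ: "\<forall>g\<in>edges S. \<forall>e\<in>QE g. 0 \<le> l e" using Q nn unfolding csub_def by blast
  have "sum l UE \<le> sum l (\<Union>x\<in>verts S. RE x) + sum l (\<Union>g\<in>edges S. QE g)"
    unfolding UE_def using finR finQ fS nnR nnQ by (intro sum_un_le) auto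
  also have "\<dots> \<le> (\<Sum>x\<in>verts S. sum l (RE x)) + (\<Sum>g\<in>edges S. sum l (QE g))"
    using sum_union_le[OF fS(1) finR nnR] sum_union_le[OF fS(2) finQ nnQ] by linarith
  finally have "csub K UV UE \<and> sum l UE \<le> (\<Sum>x\<in>verts S. sum l (RE x)) + (\<Sum>g\<in>edges S. sum l (QE g))"
    using cs by blast
  then show ?thesis unfolding UV_def UE_def .
qed

lemma csub_restrict:
  assumes "csub K2 V E" "V \<subseteq> verts K" "E \<subseteq> edges K" "\<forall>e\<in>E. ends K e = ends K2 e"
  shows "csub K V E"
proof -
  have "adj (mk K V E) u w = adj (mk K2 V E) u w" for u w
    unfolding adj_mk by (rule bex_cong[OF refl]) (simp add: assms(4))
  then have eq: "adj (mk K V E) = adj (mk K2 V E)" by (simp add: fun_eq_iff)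
  have "\<forall>e\<in>E. ends K e \<subseteq> V" using assms(1,4) unfolding csub_def by auto
  then show ?thesis using assms unfolding csub_def eq by auto
qed

lemma csub_empty: "csub K {} {}"
  by (simp add: csub_def)

lemma rtranclp_exit:
  assumes "R\<^sup>*\<^sup>* a b" "a \<in> U" "b \<notin> U"
  shows "\<exists>c d. c \<in> U \<and> d \<notin> U \<and> R c d"
  using assms by (induction rule: rtranclp_induct) auto

lemma conn_insert:
  assumes "connected_graph (induced H S)" "c \<in> S" "adj H c d"
  shows "connected_graph (induced H (insert d S))"
proof -
  let ?R = "(adj (induced H (insert d S)))\<^sup>*\<^sup>*"
  have mono: "adj (induced H S) \<le> adj (induced H (insert d S))"
    unfolding le_fun_def le_bool_def adj_def induced_def by auto
  have a: "?R u w" if "u \<in> S" "w \<in> S" for u w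
  proof -
    have "(adj (induced H S))\<^sup>*\<^sup>* u w" using assms(1) that unfolding connected_graph_def induced_def by simp
    then show ?thesis using rtranclp_mono[OF mono] by (metis predicate2D)
  qed
  obtain e where e: "e \<in> edges H" "ends H e = {c,d}" using assms(3) unfolding adj_def by blast
  then have "adj (induced H (insert d S)) c d" using assms(2) unfolding adj_def induced_def by auto
  then have cd: "?R c d" by simp
  then have dc: "?R d c" by (rule rtranclp_adj_sym)
  have "?R u w" if "u \<in> insert d S" "w \<in> insert d S" for u w
  proof -
    have "?R u c" using that(1) a[OF _ assms(2)] dc by auto
    moreover have "?R c w" using that(2) a[OF assms(2)] cd by auto
    ultimately show ?thesis by (rule rtranclp_trans)
  qed
  then show ?thesis unfolding connected_graph_def induced_def by simp
qed

locale mcon =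
  fixes k :: nat and H G G' :: "(nat,nat) mgraph" and l :: "nat \<Rightarrow> real"
    and B :: "nat \<Rightarrow> nat set" and f :: "nat \<Rightarrow> nat" and a0 :: nat
  assumes k2: "2 \<le> k"
    and gH: "graph H" and gG: "graph G" and gG': "graph G'"
    and Bprops: "\<forall>v\<in>verts G. B v \<noteq> {} \<and> B v \<subseteq> verts H \<and> connected_graph (induced H (B v))"
    and Bdisj: "\<forall>u\<in>verts G. \<forall>v\<in>verts G. u \<noteq> v \<longrightarrow> B u \<inter> B v = {}"
    and fedge: "\<forall>e\<in>edges G. f e \<in> edges H \<and> (\<exists>u v a b. ends G e = {u,v} \<and> ends H (f e) = {a,b} \<and> a \<in> B u \<and> b \<in> B v)"
    and sub: "subgraph G G'" and lf: "length_function G' l" and kg: "k_geodesic k G' l G"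
    and a0: "a0 \<in> verts G"
begin

definition "VGc = {v. (adj G)\<^sup>*\<^sup>* a0 v}"
definition "VC = {x. (adj G')\<^sup>*\<^sup>* a0 x}"
definition "r v = (SOME x. x \<in> B v)"
definition "VHc = {y. (adj H)\<^sup>*\<^sup>* (r a0) y}"

lemma VGc_sub: "VGc \<subseteq> verts G"
  unfolding VGc_def using rtranclp_verts[OF gG a0] by blast

lemma a0_VGc: "a0 \<in> VGc" unfolding VGc_def by simp

lemma VGc_step: "u \<in> VGc \<Longrightarrow> adj G u w \<Longrightarrow> w \<in> VGc"
  unfolding VGc_def by (simp add: rtranclp.rtrancl_into_rtrancl)

lemma VHc_step: "u \<in> VHc \<Longrightarrow> adj H u w \<Longrightarrow> w \<in> VHc"
  unfolding VHc_def by (simp add: rtranclp.rtrancl_into_rtrancl)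

lemma VC_step: "u \<in> VC \<Longrightarrow> adj G' u w \<Longrightarrow> w \<in> VC"
  unfolding VC_def by (simp add: rtranclp.rtrancl_into_rtrancl)

lemma nn_G': "\<forall>e\<in>edges G'. 0 \<le> l e"
  using lf unfolding length_function_def by (simp add: less_imp_le)

lemma nn_G: "\<forall>e\<in>edges G. 0 \<le> l e"
  using nn_G' sub unfolding subgraph_def by blast

lemma a0_G': "a0 \<in> verts G'" using a0 sub unfolding subgraph_def by blast

lemma adj_G_G': "adj G u w \<Longrightarrow> adj G' u w"
proof -
  assume "adj G u w"
  then obtain e where e: "e \<in> edges G" "ends G e = {u,w}" unfolding adj_def by blast
  then have "e \<in> edges G'" "ends G' e = {u,w}" using sub unfolding subgraph_def by auto
  then show ?thesis unfolding adj_def by blast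
qed

lemma VGc_VC: "VGc \<subseteq> VC"
proof
  fix x assume "x \<in> VGc"
  then have "(adj G)\<^sup>*\<^sup>* a0 x" unfolding VGc_def by simp
  then have "(adj G')\<^sup>*\<^sup>* a0 x"
    by (induction rule: rtranclp_induct) (auto intro: rtranclp.rtrancl_into_rtrancl adj_G_G')
  then show "x \<in> VC" unfolding VC_def by simp
qed

lemma VC_G:
  assumes "x \<in> VC" "x \<in> verts G"
  shows "x \<in> VGc"
proof -
  have cs: "csub G' VC {e\<in>edges G'. ends G' e \<subseteq> VC}"
    unfolding VC_def using component_csub[OF gG' a0_G'] .
  have "sd G' l {a0, x} \<le> ereal (sum l {e\<in>edges G'. ends G' e \<subseteq> VC})"
  proof -
    have "{a0,x} \<subseteq> VC" using assms(1) a0_VGc VGc_VC by auto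
    then show ?thesis by (rule sd_le_csub[OF gG' cs])
  qed
  then have fin: "sd G' l {a0,x} \<noteq> \<infinity>" by auto
  have "card {a0,x} \<le> k" using k2 by (simp add: card_insert_if)
  then have "sd G l {a0,x} = sd G' l {a0,x}" using kg a0 assms(2) unfolding k_geodesic_def by simp
  then have fin2: "sd G l {a0,x} \<noteq> \<infinity>" using fin by simp
  obtain V E where "csub G V E" "{a0,x} \<subseteq> V" using sd_attain[OF gG fin2] by (elim exE conjE)
  then have "(adj G)\<^sup>*\<^sup>* a0 x" using csub_rtranclp[of G V E a0 x] by simp
  then show ?thesis unfolding VGc_def by simp
qed

lemma r_in: "v \<in> verts G \<Longrightarrow> r v \<in> B v"
  unfolding r_def using Bprops by (metis some_in_eq)

lemma B_conn: "v \<in> verts G \<Longrightarrow> x \<in> B v \<Longrightarrow> y \<in> B v \<Longrightarrow> (adj H)\<^sup>*\<^sup>* x y"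
proof -
  assume a: "v \<in> verts G" "x \<in> B v" "y \<in> B v"
  then have "(adj (induced H (B v)))\<^sup>*\<^sup>* x y" using Bprops unfolding connected_graph_def induced_def by auto
  moreover have "adj (induced H (B v)) \<le> adj H" unfolding le_fun_def le_bool_def adj_def induced_def by auto
  ultimately show ?thesis using rtranclp_mono by (metis predicate2D)
qed

lemma adj_G_lift:
  assumes "adj G v w"
  shows "(adj H)\<^sup>*\<^sup>* (r v) (r w)"
proof -
  obtain e where e: "e \<in> edges G" "ends G e = {v,w}" using assms unfolding adj_def by blast
  have vw: "v \<in> verts G" "w \<in> verts G" using adj_verts[OF gG assms] by auto
  obtain u' v' a b where uv: "ends G e = {u',v'}" "ends H (f e) = {a,b}" "a \<in> B u'" "b \<in> B v'"
    using fedge e by blast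
  have ab: "adj H a b" "adj H b a" using uv(2) fedge e unfolding adj_def by (auto simp: insert_commute)
  from uv(1) e(2) have "(u' = v \<and> v' = w) \<or> (u' = w \<and> v' = v)" by (auto simp: doubleton_eq_iff)
  then show ?thesis
  proof
    assume h: "u' = v \<and> v' = w"
    have "(adj H)\<^sup>*\<^sup>* (r v) a" using B_conn[OF vw(1) r_in[OF vw(1)]] uv(3) h by simp
    moreover have "(adj H)\<^sup>*\<^sup>* b (r w)" using B_conn[OF vw(2) _ r_in[OF vw(2)]] uv(4) h by simp
    ultimately show ?thesis using ab(1) by (meson converse_rtranclp_into_rtranclp rtranclp_trans)
  next
    assume h: "u' = w \<and> v' = v"
    have "(adj H)\<^sup>*\<^sup>* (r v) b" using B_conn[OF vw(1) r_in[OF vw(1)]] uv(4) h by simp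
    moreover have "(adj H)\<^sup>*\<^sup>* a (r w)" using B_conn[OF vw(2) _ r_in[OF vw(2)]] uv(3) h by simp
    ultimately show ?thesis using ab(2) by (meson converse_rtranclp_into_rtranclp rtranclp_trans)
  qed
qed

lemma B_VHc: "v \<in> VGc \<Longrightarrow> B v \<subseteq> VHc"
proof
  fix x assume v: "v \<in> VGc" and x: "x \<in> B v"
  have "(adj G)\<^sup>*\<^sup>* a0 v" using v unfolding VGc_def by simp
  then have "(adj H)\<^sup>*\<^sup>* (r a0) (r v)"
    by (induction rule: rtranclp_induct) (auto intro: rtranclp_trans adj_G_lift)
  moreover have "(adj H)\<^sup>*\<^sup>* (r v) x" using B_conn r_in x v VGc_sub by blast
  ultimately show "x \<in> VHc" unfolding VHc_def by (simp add: rtranclp_trans)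
qed

end

lemma induced_conn: "connected_graph (induced H S) \<Longrightarrow> x \<in> S \<Longrightarrow> y \<in> S \<Longrightarrow> (adj H)\<^sup>*\<^sup>* x y"
proof -
  assume a: "connected_graph (induced H S)" "x \<in> S" "y \<in> S"
  then have "(adj (induced H S))\<^sup>*\<^sup>* x y" unfolding connected_graph_def induced_def by auto
  moreover have "adj (induced H S) \<le> adj H" unfolding le_fun_def le_bool_def adj_def induced_def by auto
  ultimately show ?thesis using rtranclp_mono by (metis predicate2D)
qed

context mcon begin

definition "good B2 \<longleftrightarrow> (\<forall>v\<in>VGc. B v \<subseteq> B2 v \<and> B2 v \<subseteq> verts H \<and> connected_graph (induced H (B2 v))) \<and>
   (\<forall>u\<in>VGc. \<forall>v\<in>VGc. u \<noteq> v \<longrightarrow> B2 u \<inter> B2 v = {})"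

lemma good_B: "good B"
  unfolding good_def using Bprops Bdisj VGc_sub by (meson subsetD subset_refl)

lemma r_VHc: "v \<in> VGc \<Longrightarrow> r v \<in> VHc"
  using B_VHc r_in VGc_sub by blast

lemma VHc_H: "VHc \<subseteq> verts H"
proof -
  have "r a0 \<in> verts H" using r_in[OF a0] Bprops a0 by blast
  then show ?thesis unfolding VHc_def using rtranclp_verts[OF gH] by blast
qed

lemma good_sub_VHc: "good B2 \<Longrightarrow> v \<in> VGc \<Longrightarrow> B2 v \<subseteq> VHc"
proof
  fix x assume g: "good B2" and v: "v \<in> VGc" and x: "x \<in> B2 v"
  have rv: "r v \<in> B2 v" using g v r_in VGc_sub unfolding good_def by blast
  have "connected_graph (induced H (B2 v))" using g v unfolding good_def by blast
  then have "(adj H)\<^sup>*\<^sup>* (r v) x" using induced_conn rv x by metis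
  moreover have "(adj H)\<^sup>*\<^sup>* (r a0) (r v)" using r_VHc[OF v] unfolding VHc_def by simp
  ultimately show "x \<in> VHc" unfolding VHc_def by (simp add: rtranclp_trans)
qed

lemma finite_VGc: "finite VGc" using VGc_sub gG unfolding graph_def by (meson finite_subset)

lemma exists_max: "\<exists>B2. good B2 \<and> (\<Union>v\<in>VGc. B2 v) = VHc"
proof -
  have bound: "\<forall>B2. good B2 \<longrightarrow> card (\<Union>v\<in>VGc. B2 v) < Suc (card (verts H))"
  proof (intro allI impI)
    fix B2 assume "good B2"
    then have "(\<Union>v\<in>VGc. B2 v) \<subseteq> verts H" unfolding good_def by blast
    then have "card (\<Union>v\<in>VGc. B2 v) \<le> card (verts H)" using gH unfolding graph_def by (simp add: card_mono)
    then show "card (\<Union>v\<in>VGc. B2 v) < Suc (card (verts H))" by simp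
  qed
  obtain Bm where Bm: "good Bm" "\<forall>B3. good B3 \<longrightarrow> card (\<Union>v\<in>VGc. B3 v) \<le> card (\<Union>v\<in>VGc. Bm v)"
    using Lattices_Big.ex_has_greatest_nat[of good B "\<lambda>B2. card (\<Union>v\<in>VGc. B2 v)", OF good_B bound] by blast
  define U where "U = (\<Union>v\<in>VGc. Bm v)"
  have UH: "U \<subseteq> verts H" using Bm(1) unfolding good_def U_def by blast
  have finU: "finite U" using UH gH unfolding graph_def by (meson finite_subset)
  have sub1: "U \<subseteq> VHc" unfolding U_def using good_sub_VHc[OF Bm(1)] by blast
  have "VHc \<subseteq> U"
  proof (rule ccontr)
    assume "\<not> VHc \<subseteq> U"
    then obtain y where y: "y \<in> VHc" "y \<notin> U" by blast
    have ra0: "r a0 \<in> U" unfolding U_def using a0_VGc Bm(1) r_in[OF a0] unfolding good_def by blast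
    obtain c d where cd: "c \<in> U" "d \<notin> U" "adj H c d"
      using rtranclp_exit[of "adj H" "r a0" y U] y ra0 unfolding VHc_def by blast
    obtain v where v: "v \<in> VGc" "c \<in> Bm v" using cd(1) unfolding U_def by blast
    define B3 where "B3 = Bm(v := insert d (Bm v))"
    have dH: "d \<in> verts H" using adj_verts[OF gH cd(3)] by simp
    have cv: "connected_graph (induced H (Bm v))" using Bm(1) v(1) unfolding good_def by blast
    have g3: "good B3"
      unfolding good_def
    proof (intro conjI ballI impI)
      fix w assume w: "w \<in> VGc"
      show "B w \<subseteq> B3 w" using Bm(1) w unfolding good_def B3_def by auto
      show "B3 w \<subseteq> verts H" using Bm(1) w dH unfolding good_def B3_def by auto
      show "connected_graph (induced H (B3 w))"
      proof (cases "w = v")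
        case True then show ?thesis unfolding B3_def using conn_insert[OF cv v(2) cd(3)] by simp
      next
        case False then show ?thesis unfolding B3_def using Bm(1) w unfolding good_def by simp
      qed
    next
      fix u w assume uw: "u \<in> VGc" "w \<in> VGc" "u \<noteq> w"
      have dis: "Bm u \<inter> Bm w = {}" using Bm(1) uw unfolding good_def by blast
      have "d \<notin> Bm u" "d \<notin> Bm w" using cd(2) uw unfolding U_def by blast+
      then show "B3 u \<inter> B3 w = {}" unfolding B3_def using dis uw(3) by auto
    qed
    have "(\<Union>x\<in>VGc. B3 x) = insert d U" unfolding B3_def U_def using v(1) by auto
    then have "card (\<Union>x\<in>VGc. B3 x) = Suc (card U)" using finU cd(2) by simp
    moreover have "card (\<Union>x\<in>VGc. B3 x) \<le> card U" using Bm(2) g3 unfolding U_def by blast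
    ultimately show False by simp
  qed
  then show ?thesis using Bm(1) sub1 unfolding U_def by blast
qed

definition "B' = (SOME B2. good B2 \<and> (\<Union>v\<in>VGc. B2 v) = VHc)"

lemma B'_good: "good B'" and B'_union: "(\<Union>v\<in>VGc. B' v) = VHc"
  using someI_ex[OF exists_max] unfolding B'_def by auto

lemma B_B': "v \<in> VGc \<Longrightarrow> B v \<subseteq> B' v"
  using B'_good unfolding good_def by blast

lemma r_B': "v \<in> VGc \<Longrightarrow> r v \<in> B' v"
  using B_B' r_in VGc_sub by blast

lemma B'_VHc: "v \<in> VGc \<Longrightarrow> B' v \<subseteq> VHc"
  using B'_union by blast

lemma B'_disj: "u \<in> VGc \<Longrightarrow> v \<in> VGc \<Longrightarrow> y \<in> B' u \<Longrightarrow> y \<in> B' v \<Longrightarrow> u = v"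
  using B'_good unfolding good_def by blast

definition "own y = (THE v. v \<in> VGc \<and> y \<in> B' v)"

lemma own_eq: "v \<in> VGc \<Longrightarrow> y \<in> B' v \<Longrightarrow> own y = v"
  unfolding own_def using B'_disj by blast

lemma own: "y \<in> VHc \<Longrightarrow> own y \<in> VGc \<and> y \<in> B' (own y)"
proof -
  assume "y \<in> VHc"
  then obtain v where "v \<in> VGc" "y \<in> B' v" using B'_union by blast
  then show ?thesis using own_eq by simp
qed

lemma own_r: "v \<in> VGc \<Longrightarrow> own (r v) = v"
  using own_eq r_B' by blast

definition "I v = {g\<in>edges H. ends H g \<subseteq> B' v}"

lemma csub_I: "v \<in> VGc \<Longrightarrow> csub H (B' v) (I v)"
proof -
  assume v: "v \<in> VGc"
  have eq: "mk H (B' v) (I v) = induced H (B' v)" unfolding mk_def induced_def I_def by simp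
  have c: "connected_graph (induced H (B' v))" "B' v \<subseteq> verts H" using B'_good v unfolding good_def by auto
  show ?thesis unfolding csub_def eq using c unfolding connected_graph_def induced_def I_def
    by auto
qed

definition "sdr X = real_of_ereal (sd G l X)"

lemma sdr: "X \<subseteq> VGc \<Longrightarrow> sd G l X = ereal (sdr X) \<and> 0 \<le> sdr X"
proof -
  assume X: "X \<subseteq> VGc"
  have cs: "csub G VGc {e\<in>edges G. ends G e \<subseteq> VGc}"
    unfolding VGc_def using component_csub[OF gG a0] .
  have le: "sd G l X \<le> ereal (sum l {e\<in>edges G. ends G e \<subseteq> VGc})" using sd_le_csub[OF gG cs X] .
  have ge: "0 \<le> sd G l X" using sd_nonneg[OF nn_G] .
  from le ge have "sd G l X = ereal (real_of_ereal (sd G l X))" by (cases "sd G l X") auto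
  moreover have "0 \<le> real_of_ereal (sd G l X)" using ge by (simp add: real_of_ereal_pos)
  ultimately show ?thesis unfolding sdr_def by simp
qed

lemma Qp_ex: "X \<subseteq> VGc \<Longrightarrow> \<exists>p. csub G (fst p) (snd p) \<and> X \<subseteq> fst p \<and> sum l (snd p) = sdr X"
proof -
  assume X: "X \<subseteq> VGc"
  have fin: "sd G l X \<noteq> \<infinity>" using sdr[OF X] by simp
  obtain V E where "csub G V E" "X \<subseteq> V" "sd G l X = ereal (sum l E)"
    using sd_attain[OF gG fin] by (elim exE conjE)
  then have "csub G (fst (V,E)) (snd (V,E)) \<and> X \<subseteq> fst (V,E) \<and> sum l (snd (V,E)) = sdr X"
    using sdr[OF X] by simp
  then show ?thesis by blast
qed

definition "Qp X = (SOME p. csub G (fst p) (snd p) \<and> X \<subseteq> fst p \<and> sum l (snd p) = sdr X)"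

lemma Qp: "X \<subseteq> VGc \<Longrightarrow> csub G (fst (Qp X)) (snd (Qp X)) \<and> X \<subseteq> fst (Qp X) \<and> sum l (snd (Qp X)) = sdr X"
  unfolding Qp_def using someI_ex[OF Qp_ex] by blast

lemma sdr_single: "v \<in> VGc \<Longrightarrow> sdr {v} = 0"
proof -
  assume v: "v \<in> VGc"
  have "sd G l {v} \<le> ereal (sum l {})"
    using sd_le_csub[OF gG csub_single[of v G]] v VGc_sub by blast
  then show ?thesis using sdr[of "{v}"] v by simp
qed

lemma sdr_edge: "e \<in> edges G \<Longrightarrow> ends G e \<subseteq> VGc \<Longrightarrow> sdr (ends G e) \<le> l e"
proof -
  assume e: "e \<in> edges G" "ends G e \<subseteq> VGc"
  have "sd G l (ends G e) \<le> ereal (sum l {e})" using sd_le_csub[OF gG csub_edge[OF gG e(1)]] by simp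
  then show ?thesis using sdr[OF e(2)] by simp
qed

end

lemma ends_adj:
  assumes "graph K" "g \<in> edges K" "y \<in> ends K g" "z \<in> ends K g" "y \<noteq> z"
  shows "adj K y z"
proof -
  have "card (ends K g) = 2" using assms(1,2) unfolding graph_def by blast
  then obtain a b where ab: "ends K g = {a,b}" by (meson card_2_iff)
  then have "ends K g = {y,z}" using assms(3,4,5) by auto
  then show ?thesis using assms(2) unfolding adj_def by blast
qed

lemma sum_insert_le:
  fixes h :: "'a \<Rightarrow> real"
  assumes "finite S" "0 \<le> h a"
  shows "sum h (insert a S) \<le> h a + sum h S"
  using assms by (simp add: sum.insert_if)

definition Kc :: "(nat,nat) mgraph \<Rightarrow> (nat,nat) mgraph \<Rightarrow> real" where
  "Kc G H = real (card (verts G) * card (edges H) + card (edges G) * (1 + 2 * card (edges H)))"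

definition Cc :: "(nat,nat) mgraph \<Rightarrow> (nat,nat) mgraph \<Rightarrow> (nat,nat) mgraph \<Rightarrow> real" where
  "Cc G G' H = real (card (verts G') * card (edges H)) + real (card (edges G')) * (Kc G H + 1 + 2 * real (card (edges H)))"

lemma Kc_nn: "0 \<le> Kc G H" unfolding Kc_def by simp
lemma Cc_nn: "0 \<le> Cc G G' H" unfolding Cc_def using Kc_nn[of G H] by simp

locale mcon2 = mcon +
  fixes \<delta> :: real
  assumes dpos: "0 < \<delta>"
begin

definition "Nv = Suc (Max (insert 0 (verts H)))"
definition "Ne = Suc (Max (insert 0 (edges H)))"
definition "newV = VC - verts G"
definition "newE = {e \<in> edges G' - edges G. ends G' e \<subseteq> VC}"
definition "\<iota> x = (if x \<in> verts G then r x else x + Nv)"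
definition "H' = \<lparr>verts = verts H \<union> (\<lambda>x. x + Nv) ` newV, edges = edges H \<union> (\<lambda>e. e + Ne) ` newE,
   ends = (\<lambda>g. if g \<in> edges H then ends H g else \<iota> ` ends G' (g - Ne))\<rparr>"
definition "\<pi> y = (if y \<in> verts H then own y else y - Nv)"
definition "\<Delta> = \<delta> * Kc G H"
definition "l' g = (if g \<in> edges H then (if ends H g \<subseteq> VHc then sdr (own ` ends H g) + \<delta> else 1)
   else l (g - Ne) + \<Delta>)"

lemma Delta_nn: "0 \<le> \<Delta>" unfolding \<Delta>_def using dpos Kc_nn by simp

lemma lt_Nv: "y \<in> verts H \<Longrightarrow> y < Nv"
proof -
  assume "y \<in> verts H"
  moreover have "finite (insert 0 (verts H))" using gH unfolding graph_def by simp
  ultimately have "y \<le> Max (insert 0 (verts H))" by simp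
  then show ?thesis unfolding Nv_def by simp
qed

lemma lt_Ne: "g \<in> edges H \<Longrightarrow> g < Ne"
proof -
  assume "g \<in> edges H"
  moreover have "finite (insert 0 (edges H))" using gH unfolding graph_def by simp
  ultimately have "g \<le> Max (insert 0 (edges H))" by simp
  then show ?thesis unfolding Ne_def by simp
qed

lemma VC_G': "VC \<subseteq> verts G'"
  unfolding VC_def using rtranclp_verts[OF gG' a0_G'] by blast

lemma newE_G': "newE \<subseteq> edges G'" unfolding newE_def by blast

lemma newV_H: "x \<in> newV \<Longrightarrow> x + Nv \<notin> verts H"
  using lt_Nv by fastforce

lemma newE_H: "e \<in> newE \<Longrightarrow> e + Ne \<notin> edges H"
  using lt_Ne by fastforce

lemma iota_VC:
  assumes "x \<in> VC"
  shows "\<iota> x \<in> verts H' \<and> \<pi> (\<iota> x) = x \<and> \<iota> x \<in> VHc \<union> (\<lambda>x. x + Nv) ` newV"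
proof (cases "x \<in> verts G")
  case True
  then have x: "x \<in> VGc" using VC_G assms by blast
  then have "\<iota> x = r x" "r x \<in> VHc" using True r_B' B'_VHc unfolding \<iota>_def by auto
  moreover have "\<pi> (r x) = x" using own_r[OF x] VHc_H \<open>r x \<in> VHc\<close> unfolding \<pi>_def by auto
  ultimately show ?thesis using VHc_H unfolding H'_def by auto
next
  case False
  then have n: "x \<in> newV" using assms unfolding newV_def by blast
  then have "\<iota> x = x + Nv" using False unfolding \<iota>_def by simp
  moreover have "\<pi> (x + Nv) = x" using newV_H[OF n] unfolding \<pi>_def by simp
  ultimately show ?thesis using n unfolding H'_def by auto
qed

lemma inj_iota: "inj_on \<iota> VC"
  by (rule inj_on_inverseI[where g = \<pi>]) (use iota_VC in blast)

lemma new_edge: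
  assumes "e \<in> newE"
  shows "e + Ne \<notin> edges H \<and> e + Ne \<in> edges H' \<and> ends H' (e + Ne) = \<iota> ` ends G' e \<and> l' (e + Ne) = l e + \<Delta>"
  using newE_H[OF assms] assms unfolding H'_def l'_def by simp

lemma H'_edge_cases: "g \<in> edges H' \<Longrightarrow> g \<in> edges H \<or> (\<exists>e\<in>newE. g = e + Ne \<and> g \<notin> edges H)"
  unfolding H'_def using newE_H by auto

lemma ends_H'_H: "g \<in> edges H \<Longrightarrow> ends H' g = ends H g"
  unfolding H'_def by simp

lemma gH': "graph H'"
proof -
  have fV: "finite newV" using VC_G' gG' unfolding newV_def graph_def by (meson finite_Diff finite_subset)
  have fE: "finite newE" using newE_G' gG' unfolding graph_def by (meson finite_subset)
  have "finite (verts H')" "finite (edges H')" using fV fE gH unfolding H'_def graph_def by auto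
  moreover have "ends H' g \<subseteq> verts H' \<and> card (ends H' g) = 2" if g: "g \<in> edges H'" for g
  proof (cases "g \<in> edges H")
    case True
    then show ?thesis using gH ends_H'_H[OF True] unfolding graph_def H'_def by auto
  next
    case False
    then obtain e where e: "e \<in> newE" "g = e + Ne" using H'_edge_cases g by blast
    have sub: "ends G' e \<subseteq> VC" using e(1) unfolding newE_def by blast
    have c2: "card (ends G' e) = 2" using e(1) newE_G' gG' unfolding graph_def by blast
    have "\<iota> ` ends G' e \<subseteq> verts H'" using iota_VC sub by blast
    moreover have "card (\<iota> ` ends G' e) = 2"
      using card_image[OF inj_on_subset[OF inj_iota sub]] c2 by simp
    ultimately show ?thesis using new_edge[OF e(1)] e(2) by simp
  qed
  ultimately show ?thesis unfolding graph_def by blast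
qed

lemma Hsub: "subgraph H H'"
  using gH unfolding subgraph_def H'_def by auto

lemma l'_H_pos: "g \<in> edges H \<Longrightarrow> 0 < l' g"
proof -
  assume g: "g \<in> edges H"
  show ?thesis
  proof (cases "ends H g \<subseteq> VHc")
    case True
    then have "own ` ends H g \<subseteq> VGc" using own by blast
    then have "0 \<le> sdr (own ` ends H g)" using sdr by blast
    then show ?thesis using g True dpos unfolding l'_def by simp
  next
    case False then show ?thesis using g unfolding l'_def by simp
  qed
qed

lemma lf': "length_function H' l'"
  unfolding length_function_def
proof
  fix g assume g: "g \<in> edges H'"
  show "0 < l' g"
  proof (cases "g \<in> edges H")
    case True then show ?thesis using l'_H_pos by blast
  next
    case False
    then obtain e where e: "e \<in> newE" "g = e + Ne" using H'_edge_cases g by blast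
    have "0 < l e" using lf newE_G' e(1) unfolding length_function_def by blast
    then show ?thesis using new_edge[OF e(1)] e(2) Delta_nn by simp
  qed
qed

lemma nn_H': "\<forall>g\<in>edges H'. 0 \<le> l' g"
  using lf' unfolding length_function_def by (simp add: less_imp_le)

lemma nn_H: "\<forall>g\<in>edges H. 0 \<le> l' g"
  using l'_H_pos by (simp add: less_imp_le)

definition "Xs = VHc \<union> (\<lambda>x. x + Nv) ` newV"

lemma closed_H': "\<forall>g\<in>edges H'. ends H' g \<inter> Xs \<noteq> {} \<longrightarrow> ends H' g \<subseteq> Xs"
proof (intro ballI impI)
  fix g assume g: "g \<in> edges H'" and ne: "ends H' g \<inter> Xs \<noteq> {}"
  show "ends H' g \<subseteq> Xs"
  proof (cases "g \<in> edges H")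
    case True
    have eH: "ends H' g = ends H g" using ends_H'_H[OF True] .
    obtain y where y: "y \<in> ends H g" "y \<in> Xs" using ne eH by blast
    have yH: "y \<in> verts H" using y(1) True gH unfolding graph_def by blast
    then have yV: "y \<in> VHc" using y(2) newV_H unfolding Xs_def by blast
    show ?thesis
    proof
      fix z assume z: "z \<in> ends H' g"
      show "z \<in> Xs"
      proof (cases "z = y")
        case True then show ?thesis using y by simp
      next
        case False
        then have "adj H y z" using ends_adj[OF gH \<open>g \<in> edges H\<close> y(1)] z eH by simp
        then show ?thesis using VHc_step[OF yV] unfolding Xs_def by blast
      qed
    qed
  next
    case False
    then obtain e where e: "e \<in> newE" "g = e + Ne" using H'_edge_cases g by blast
    have sub: "ends G' e \<subseteq> VC" using e(1) unfolding newE_def by blast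
    have "\<iota> x \<in> Xs" if "x \<in> ends G' e" for x using iota_VC[of x] sub that unfolding Xs_def by auto
    then show ?thesis using new_edge[OF e(1)] e(2) by auto
  qed
qed

lemma I_l': "v \<in> VGc \<Longrightarrow> g \<in> I v \<Longrightarrow> l' g = \<delta>"
proof -
  assume v: "v \<in> VGc" and g: "g \<in> I v"
  have gg: "g \<in> edges H" "ends H g \<subseteq> B' v" using g unfolding I_def by auto
  have sub: "ends H g \<subseteq> VHc" using gg(2) B'_VHc[OF v] by blast
  have "ends H g \<noteq> {}" using gg(1) gH unfolding graph_def by fastforce
  then have "own ` ends H g = {v}" using own_eq[OF v] gg(2) by auto
  then show ?thesis using gg(1) sub sdr_single[OF v] unfolding l'_def by simp
qed

lemma finite_I: "finite (I v)"
  using gH unfolding I_def graph_def by simp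

lemma sum_I: "v \<in> VGc \<Longrightarrow> sum l' (I v) \<le> \<delta> * card (edges H)"
proof -
  assume v: "v \<in> VGc"
  have "sum l' (I v) = sum (\<lambda>_. \<delta>) (I v)" using I_l'[OF v] by (rule sum.cong[OF refl])
  also have "\<dots> = \<delta> * card (I v)" by simp
  also have "\<dots> \<le> \<delta> * card (edges H)"
  proof -
    have "card (I v) \<le> card (edges H)" using gH unfolding I_def graph_def by (simp add: card_mono)
    then show ?thesis using dpos by simp
  qed
  finally show ?thesis .
qed

end

lemma closed_step:
  assumes "graph K" "\<And>u w. u \<in> X \<Longrightarrow> adj K u w \<Longrightarrow> w \<in> X"
  shows "\<forall>g\<in>edges K. ends K g \<inter> X \<noteq> {} \<longrightarrow> ends K g \<subseteq> X"
proof (intro ballI impI subsetI)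
  fix g z assume g: "g \<in> edges K" "ends K g \<inter> X \<noteq> {}" "z \<in> ends K g"
  obtain y where y: "y \<in> ends K g" "y \<in> X" using g(2) by blast
  show "z \<in> X"
  proof (cases "z = y")
    case True then show ?thesis using y by simp
  next
    case False
    then have "adj K y z" using ends_adj[OF assms(1) g(1) y(1) g(3)] by simp
    then show ?thesis using assms(2) y(2) by blast
  qed
qed

context mcon2 begin

lemma closed_VHc: "\<forall>g\<in>edges H. ends H g \<inter> VHc \<noteq> {} \<longrightarrow> ends H g \<subseteq> VHc"
  by (rule closed_step[OF gH]) (rule VHc_step)

lemma closed_VGc: "\<forall>g\<in>edges G. ends G g \<inter> VGc \<noteq> {} \<longrightarrow> ends G g \<subseteq> VGc"
  by (rule closed_step[OF gG]) (rule VGc_step)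

lemma closed_VC: "\<forall>g\<in>edges G'. ends G' g \<inter> VC \<noteq> {} \<longrightarrow> ends G' g \<subseteq> VC"
  by (rule closed_step[OF gG']) (rule VC_step)

definition "EPV e = (\<Union>v\<in>ends G e. B' v) \<union> ends H (f e)"
definition "EPE e = insert (f e) (\<Union>v\<in>ends G e. I v)"

lemma EP:
  assumes e: "e \<in> edges G" "ends G e \<subseteq> VGc"
  shows "csub H (EPV e) (EPE e) \<and> r ` ends G e \<subseteq> EPV e \<and> sum l' (EPE e) \<le> l e + \<delta> + 2*\<delta>*card (edges H)"
proof -
  have h: "f e \<in> edges H \<and> (\<exists>u v a b. ends G e = {u,v} \<and> ends H (f e) = {a,b} \<and> a \<in> B u \<and> b \<in> B v)"
    using fedge e(1) by (rule bspec)
  then have fe: "f e \<in> edges H" by (rule conjunct1)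
  obtain u v a b where uv: "ends G e = {u,v}" "ends H (f e) = {a,b}" "a \<in> B u" "b \<in> B v"
    using h by (elim conjE exE)
  have u: "u \<in> VGc" and v: "v \<in> VGc" using e(2) uv(1) by auto
  have aB: "a \<in> B' u" using B_B'[OF u] uv(3) by blast
  have bB: "b \<in> B' v" using B_B'[OF v] uv(4) by blast
  have c12: "csub H (B' u \<union> ends H (f e)) (I u \<union> {f e})"
    by (rule csub_union[OF csub_I[OF u] csub_edge[OF gH fe] aB]) (simp add: uv(2))
  have c123: "csub H ((B' u \<union> ends H (f e)) \<union> B' v) ((I u \<union> {f e}) \<union> I v)"
    by (rule csub_union[OF c12 csub_I[OF v], of b]) (auto simp: uv(2) bB)
  have eqV: "EPV e = (B' u \<union> ends H (f e)) \<union> B' v" unfolding EPV_def uv(1) by auto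
  have eqE: "EPE e = insert (f e) (I u \<union> I v)" unfolding EPE_def uv(1) by auto
  have "(I u \<union> {f e}) \<union> I v = insert (f e) (I u \<union> I v)" by auto
  then have cs: "csub H (EPV e) (EPE e)" using c123 eqV eqE by simp
  have rr: "r ` ends G e \<subseteq> EPV e" using r_B'[OF u] r_B'[OF v] eqV uv(1) by auto
  have sab: "{a,b} \<subseteq> VHc" using aB bB B'_VHc u v by blast
  have own_ab: "own ` {a,b} = ends G e" using own_eq[OF u aB] own_eq[OF v bB] uv(1) by auto
  have lfe: "l' (f e) \<le> l e + \<delta>"
    using fe sab own_ab sdr_edge[OF e] uv(2) unfolding l'_def by simp
  have s1: "sum l' (EPE e) \<le> l' (f e) + sum l' (I u \<union> I v)"
    unfolding eqE by (rule sum_insert_le) (use finite_I nn_H fe in auto)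
  have s2: "sum l' (I u \<union> I v) \<le> sum l' (I u) + sum l' (I v)"
    by (rule sum_un_le) (use finite_I nn_H in \<open>auto simp: I_def\<close>)
  have "sum l' (EPE e) \<le> l e + \<delta> + 2*\<delta>*card (edges H)"
    using s1 s2 lfe sum_I[OF u] sum_I[OF v] by linarith
  then show ?thesis using cs rr by blast
qed

lemma mk_simps: "verts (mk K V E) = V" "edges (mk K V E) = E" "ends (mk K V E) = ends K"
  by (simp_all add: mk_def)

lemma proj_mk:
  fixes K :: "('a,'b) mgraph" and K2 :: "('v,'e) mgraph" and l2 :: "'e \<Rightarrow> real"
  assumes gK: "graph K" and gK2: "graph K2" and cs: "csub K V E"
   and R: "\<forall>x\<in>V. csub K2 (RV x) (RE x) \<and> p x \<in> RV x"
   and Q: "\<forall>g\<in>E. csub K2 (QV g) (QE g) \<and> p ` ends K g \<subseteq> QV g"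
   and nn: "\<forall>e\<in>edges K2. 0 \<le> l2 e"
  shows "csub K2 ((\<Union>x\<in>V. RV x) \<union> (\<Union>g\<in>E. QV g)) ((\<Union>x\<in>V. RE x) \<union> (\<Union>g\<in>E. QE g))
     \<and> sum l2 ((\<Union>x\<in>V. RE x) \<union> (\<Union>g\<in>E. QE g)) \<le> (\<Sum>x\<in>V. sum l2 (RE x)) + (\<Sum>g\<in>E. sum l2 (QE g))"
proof -
  have fin: "finite V" "finite E" using csub_finite[OF gK cs] by auto
  have E: "E \<subseteq> edges K" "\<forall>g\<in>E. ends K g \<subseteq> V" using cs unfolding csub_def by auto
  have ne: "\<forall>g\<in>E. ends K g \<noteq> {}"
  proof
    fix g assume "g \<in> E"
    then have "card (ends K g) = 2" using E gK unfolding graph_def by blast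
    then show "ends K g \<noteq> {}" by auto
  qed
  have conS: "\<forall>u\<in>V. \<forall>w\<in>V. (adj (mk K V E))\<^sup>*\<^sup>* u w" using cs unfolding csub_def by blast
  show ?thesis
    using proj[where S = "mk K V E" and K = K2 and RV = RV and RE = RE and p = p and QV = QV and QE = QE and l = l2]
      gK2 fin E(2) ne conS R Q nn unfolding mk_simps by blast
qed

lemma liftH:
  assumes cs: "csub G VT ET" and VT: "VT \<subseteq> VGc"
  shows "\<exists>LV LE. csub H LV LE \<and> (\<Union>v\<in>VT. B' v) \<subseteq> LV \<and> sum l' LE \<le> sum l ET + \<Delta>"
proof -
  have fin: "finite VT" "finite ET" using csub_finite[OF gG cs] by auto
  have ET: "ET \<subseteq> edges G" "\<forall>e\<in>ET. ends G e \<subseteq> VT" using cs unfolding csub_def by auto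
  have R: "\<forall>x\<in>VT. csub H (B' x) (I x) \<and> r x \<in> B' x" using csub_I r_B' VT by blast
  have Q: "\<forall>g\<in>ET. csub H (EPV g) (EPE g) \<and> r ` ends G g \<subseteq> EPV g"
  proof
    fix g assume g: "g \<in> ET"
    then have "ends G g \<subseteq> VGc" using ET VT by blast
    then show "csub H (EPV g) (EPE g) \<and> r ` ends G g \<subseteq> EPV g" using EP g ET by blast
  qed
  have P: "csub H ((\<Union>x\<in>VT. B' x) \<union> (\<Union>g\<in>ET. EPV g)) ((\<Union>x\<in>VT. I x) \<union> (\<Union>g\<in>ET. EPE g))
     \<and> sum l' ((\<Union>x\<in>VT. I x) \<union> (\<Union>g\<in>ET. EPE g)) \<le> (\<Sum>x\<in>VT. sum l' (I x)) + (\<Sum>g\<in>ET. sum l' (EPE g))"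
    by (rule proj_mk[OF gG gH cs R Q nn_H])
  have b1: "(\<Sum>x\<in>VT. sum l' (I x)) \<le> real (card VT) * (\<delta> * card (edges H))"
    using sum_bounded_above[of VT "\<lambda>x. sum l' (I x)" "\<delta> * card (edges H)"] sum_I VT by auto
  have b2: "(\<Sum>g\<in>ET. sum l' (EPE g)) \<le> (\<Sum>g\<in>ET. l g + (\<delta> + 2*\<delta>*card (edges H)))"
  proof (rule sum_mono)
    fix g assume g: "g \<in> ET"
    then have "ends G g \<subseteq> VGc" using ET VT by blast
    then show "sum l' (EPE g) \<le> l g + (\<delta> + 2*\<delta>*card (edges H))" using EP g ET by fastforce
  qed
  have b3: "(\<Sum>g\<in>ET. l g + (\<delta> + 2*\<delta>*card (edges H))) = sum l ET + real (card ET) * (\<delta> + 2*\<delta>*card (edges H))"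
    by (simp add: sum.distrib)
  have cV: "card VT \<le> card (verts G)" using VT VGc_sub gG unfolding graph_def by (meson card_mono subset_trans)
  have cE: "card ET \<le> card (edges G)" using ET gG unfolding graph_def by (meson card_mono)
  have m1: "real (card VT) * (\<delta> * card (edges H)) \<le> real (card (verts G)) * (\<delta> * card (edges H))"
    by (rule mult_right_mono) (use cV dpos in auto)
  have m2: "real (card ET) * (\<delta> + 2*\<delta>*card (edges H)) \<le> real (card (edges G)) * (\<delta> + 2*\<delta>*card (edges H))"
    by (rule mult_right_mono) (use cE dpos in auto)
  have D: "\<Delta> = real (card (verts G)) * (\<delta> * card (edges H)) + real (card (edges G)) * (\<delta> + 2*\<delta>*card (edges H))"
    unfolding \<Delta>_def Kc_def by (simp add: algebra_simps)
  have "sum l' ((\<Union>x\<in>VT. I x) \<union> (\<Union>g\<in>ET. EPE g)) \<le> sum l ET + \<Delta>"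
    using P b1 b2 b3 m1 m2 D by linarith
  moreover have "(\<Union>v\<in>VT. B' v) \<subseteq> (\<Union>x\<in>VT. B' x) \<union> (\<Union>g\<in>ET. EPV g)" by blast
  ultimately show ?thesis using P by blast
qed

lemma projHG:
  assumes A0: "A0 \<subseteq> VGc"
  shows "sd G l A0 \<le> sd H l' (r ` A0)"
proof (rule sd_ge_csub)
  fix V E assume cs: "csub H V E" and AV: "r ` A0 \<subseteq> V"
  have E: "E \<subseteq> edges H" "\<forall>g\<in>E. ends H g \<subseteq> V" using cs unfolding csub_def by auto
  have nnE: "0 \<le> sum l' E" using nn_H E(1) by (intro sum_nonneg) auto
  show "sd G l A0 \<le> ereal (sum l' E)"
  proof (cases "A0 = {}")
    case True
    have "sd G l {} \<le> ereal (sum l {})" using sd_le_csub[OF gG csub_empty] by simp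
    then show ?thesis using True nnE by (simp add: order_trans)
  next
    case False
    then obtain a where a: "a \<in> A0" by blast
    have ra: "r a \<in> V" "r a \<in> VHc" using AV a r_VHc A0 by auto
    have VV: "V \<subseteq> VHc" by (rule csub_closed[OF cs closed_VHc ra])
    have R: "\<forall>y\<in>V. csub G {own y} {} \<and> own y \<in> {own y}"
    proof
      fix y assume "y \<in> V"
      then have "own y \<in> VGc" using VV own by blast
      then have "own y \<in> verts G" using VGc_sub by blast
      then show "csub G {own y} {} \<and> own y \<in> {own y}" using csub_single by simp
    qed
    have Q: "\<forall>g\<in>E. csub G (fst (Qp (own ` ends H g))) (snd (Qp (own ` ends H g))) \<and> own ` ends H g \<subseteq> fst (Qp (own ` ends H g))"
    proof
      fix g assume g: "g \<in> E"
      then have "own ` ends H g \<subseteq> VGc" using E VV own by blast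
      then show "csub G (fst (Qp (own ` ends H g))) (snd (Qp (own ` ends H g))) \<and> own ` ends H g \<subseteq> fst (Qp (own ` ends H g))"
        using Qp by blast
    qed
    have P: "csub G ((\<Union>y\<in>V. {own y}) \<union> (\<Union>g\<in>E. fst (Qp (own ` ends H g)))) ((\<Union>y\<in>V. {}) \<union> (\<Union>g\<in>E. snd (Qp (own ` ends H g))))
     \<and> sum l ((\<Union>y\<in>V. {}) \<union> (\<Union>g\<in>E. snd (Qp (own ` ends H g)))) \<le> (\<Sum>y\<in>V. sum l {}) + (\<Sum>g\<in>E. sum l (snd (Qp (own ` ends H g))))"
      by (rule proj_mk[OF gH gG cs R Q nn_G])
    have b: "(\<Sum>g\<in>E. sum l (snd (Qp (own ` ends H g)))) \<le> sum l' E"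
    proof (rule sum_mono)
      fix g assume g: "g \<in> E"
      then have s: "own ` ends H g \<subseteq> VGc" "ends H g \<subseteq> VHc" using E VV own by blast+
      then have "sum l (snd (Qp (own ` ends H g))) = sdr (own ` ends H g)" using Qp by blast
      then show "sum l (snd (Qp (own ` ends H g))) \<le> l' g" using s(2) g E(1) dpos unfolding l'_def by auto
    qed
    have "A0 \<subseteq> (\<Union>y\<in>V. {own y})"
    proof
      fix x assume "x \<in> A0"
      then have "r x \<in> V" "own (r x) = x" using AV own_r A0 by auto
      then show "x \<in> (\<Union>y\<in>V. {own y})" by blast
    qed
    then have "sd G l A0 \<le> ereal (sum l ((\<Union>y\<in>V. {}) \<union> (\<Union>g\<in>E. snd (Qp (own ` ends H g)))))"
      using sd_le_csub[OF gG] P by blast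
    also have "\<dots> \<le> ereal (sum l' E)" using P b by simp
    finally show ?thesis .
  qed
qed

end

context mcon2 begin

lemma kgeo: "k_geodesic k H' l' H"
  unfolding k_geodesic_def
proof (intro allI impI, elim conjE)
  fix A assume AH: "A \<subseteq> verts H" and cA: "card A \<le> k"
  have ge: "sd H' l' A \<le> sd H l' A"
  proof (rule sd_ge_csub)
    fix V E assume "csub H V E" "A \<subseteq> V"
    then show "sd H' l' A \<le> ereal (sum l' E)" using sd_le_csub[OF gH' csub_mono[OF Hsub]] by blast
  qed
  have le: "sd H l' A \<le> sd H' l' A"
  proof (rule sd_ge_csub)
    fix V E assume cs: "csub H' V E" and AV: "A \<subseteq> V"
    have E': "E \<subseteq> edges H'" "\<forall>g\<in>E. ends H' g \<subseteq> V" "V \<subseteq> verts H'" using cs unfolding csub_def by auto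
    have finE: "finite E" using csub_finite[OF gH' cs] by simp
    have nnE: "0 \<le> sum l' E" using nn_H' E'(1) by (intro sum_nonneg) auto
    show "sd H l' A \<le> ereal (sum l' E)"
    proof (cases "A = {}")
      case True
      have "sd H l' {} \<le> ereal (sum l' {})" using sd_le_csub[OF gH csub_empty] by simp
      then show ?thesis using True nnE by (simp add: order_trans)
    next
      case False
      then obtain a where a: "a \<in> A" by blast
      show ?thesis
      proof (cases "E \<subseteq> edges H")
        case True
        have VH: "V \<subseteq> verts H"
        proof
          fix x assume x: "x \<in> V"
          show "x \<in> verts H"
          proof (rule ccontr)
            assume xn: "x \<notin> verts H"
            have aV: "a \<in> V" "a \<in> verts H" using a AV AH by auto
            then have xa: "x \<noteq> a" using xn by auto
            have "(adj (mk H' V E))\<^sup>*\<^sup>* x a" using cs x aV(1) unfolding csub_def by blast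
            then obtain y where "adj (mk H' V E) x y" using xa by (metis converse_rtranclpE)
            then obtain g where g: "g \<in> E" "ends H' g = {x,y}" by (auto simp: adj_mk)
            then have gH1: "g \<in> edges H" using True by blast
            then have "ends H g = {x,y}" using g(2) ends_H'_H by simp
            then have "x \<in> verts H" using gH gH1 unfolding graph_def by blast
            then show False using xn by simp
          qed
        qed
        have "\<forall>e\<in>E. ends H e = ends H' e" using True ends_H'_H by auto
        then have "csub H V E" by (rule csub_restrict[OF cs VH True])
        then show ?thesis using sd_le_csub[OF gH _ AV] by blast
      next
        case False
        then obtain g0 where g0: "g0 \<in> E" "g0 \<notin> edges H" by blast
        then have g0H': "g0 \<in> edges H'" using E'(1) by blast
        then obtain e0 where e0: "e0 \<in> newE" "g0 = e0 + Ne" using H'_edge_cases g0(2) by blast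
        have "card (ends H' g0) = 2" using gH' g0H' unfolding graph_def by blast
        then obtain x where x: "x \<in> ends H' g0" by fastforce
        have xV: "x \<in> V" using x E'(2) g0(1) by blast
        have xX: "x \<in> Xs" using closed_H' g0H' x
        proof -
          have "ends G' e0 \<subseteq> VC" using e0(1) unfolding newE_def by blast
          then have "\<iota> ` ends G' e0 \<subseteq> Xs" using iota_VC unfolding Xs_def by blast
          then show ?thesis using new_edge[OF e0(1)] e0(2) x by auto
        qed
        have VX: "V \<subseteq> Xs" by (rule csub_closed[OF cs closed_H' xV xX])
        have VHc_of: "y \<in> VHc" if "y \<in> V" "y \<in> verts H" for y
          using that VX newV_H unfolding Xs_def by blast
        have AVc: "A \<subseteq> VHc" using AH AV VHc_of by blast
        define QV where "QV g = (if g \<in> edges H then fst (Qp (own ` ends H g)) else ends G' (g - Ne))" for g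
        define QE where "QE g = (if g \<in> edges H then snd (Qp (own ` ends H g)) else {g - Ne})" for g
        define pl where "pl g = (if g \<in> edges H then sdr (own ` ends H g) else l (g - Ne))" for g
        have R: "\<forall>y\<in>V. csub G' {\<pi> y} {} \<and> \<pi> y \<in> {\<pi> y}"
        proof
          fix y assume y: "y \<in> V"
          have "\<pi> y \<in> verts G'"
          proof (cases "y \<in> verts H")
            case True
            then have "y \<in> VHc" using VHc_of y by blast
            then have "own y \<in> VGc" using own by blast
            then show ?thesis using True VGc_sub sub unfolding \<pi>_def subgraph_def by auto
          next
            case False
            then obtain x' where x': "x' \<in> newV" "y = x' + Nv" using y VX VHc_H unfolding Xs_def by blast
            then have "\<pi> y = x'" using False unfolding \<pi>_def by simp
            then show ?thesis using x'(1) VC_G' unfolding newV_def by blast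
          qed
          then show "csub G' {\<pi> y} {} \<and> \<pi> y \<in> {\<pi> y}" using csub_single by simp
        qed
        have Q: "csub G' (QV g) (QE g) \<and> \<pi> ` ends H' g \<subseteq> QV g \<and> sum l (QE g) = pl g \<and> pl g \<le> l' g"
          if g: "g \<in> E" for g
        proof (cases "g \<in> edges H")
          case True
          have eH: "ends H' g = ends H g" using ends_H'_H[OF True] .
          have eV: "ends H g \<subseteq> VHc"
          proof
            fix y assume y: "y \<in> ends H g"
            then have "y \<in> verts H" using gH True unfolding graph_def by blast
            moreover have "y \<in> V" using y E'(2) g eH by blast
            ultimately show "y \<in> VHc" using VHc_of by blast
          qed
          have oV: "own ` ends H g \<subseteq> VGc" using eV own by blast
          have qp: "csub G (fst (Qp (own ` ends H g))) (snd (Qp (own ` ends H g)))"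
             "own ` ends H g \<subseteq> fst (Qp (own ` ends H g))" "sum l (snd (Qp (own ` ends H g))) = sdr (own ` ends H g)"
            using Qp[OF oV] by auto
          have pi_eq: "\<pi> ` ends H' g = own ` ends H g" using eH eV VHc_H unfolding \<pi>_def by auto
          have "pl g \<le> l' g" using True eV dpos unfolding pl_def l'_def by simp
          then show ?thesis using qp csub_mono[OF sub qp(1)] pi_eq True unfolding QV_def QE_def pl_def by simp
        next
          case False
          then obtain e where e: "e \<in> newE" "g = e + Ne" using H'_edge_cases E'(1) g by blast
          have eG': "e \<in> edges G'" using e(1) newE_G' by blast
          have sVC: "ends G' e \<subseteq> VC" using e(1) unfolding newE_def by blast
          have pi_eq: "\<pi> ` ends H' g = ends G' e"
          proof -
            have "\<pi> ` ends H' g = \<pi> ` \<iota> ` ends G' e" using new_edge[OF e(1)] e(2) by simp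
            also have "\<dots> = ends G' e" using iota_VC sVC by (force simp: image_image)
            finally show ?thesis .
          qed
          have "pl g \<le> l' g" using False e new_edge[OF e(1)] Delta_nn unfolding pl_def by simp
          then show ?thesis using csub_edge[OF gG' eG'] pi_eq False e unfolding QV_def QE_def pl_def by simp
        qed
        have Q': "\<forall>g\<in>E. csub G' (QV g) (QE g) \<and> \<pi> ` ends H' g \<subseteq> QV g" using Q by blast
        have P: "csub G' ((\<Union>y\<in>V. {\<pi> y}) \<union> (\<Union>g\<in>E. QV g)) ((\<Union>y\<in>V. {}) \<union> (\<Union>g\<in>E. QE g))
           \<and> sum l ((\<Union>y\<in>V. {}) \<union> (\<Union>g\<in>E. QE g)) \<le> (\<Sum>y\<in>V. sum l {}) + (\<Sum>g\<in>E. sum l (QE g))"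
          by (rule proj_mk[OF gH' gG' cs R Q' nn_G'])
        define PV where "PV = (\<Union>y\<in>V. {\<pi> y}) \<union> (\<Union>g\<in>E. QV g)"
        define PE where "PE = (\<Union>y\<in>V. {}) \<union> (\<Union>g\<in>E. QE g)"
        have Pc: "csub G' PV PE" using P unfolding PV_def PE_def by blast
        have sPE: "sum l PE \<le> (\<Sum>g\<in>E. pl g)"
        proof -
          have "(\<Sum>g\<in>E. sum l (QE g)) = (\<Sum>g\<in>E. pl g)" using Q by (intro sum.cong) auto
          then show ?thesis using P unfolding PE_def by simp
        qed
        have pl_g0: "pl g0 = l' g0 - \<Delta>" using g0(2) e0 new_edge[OF e0(1)] unfolding pl_def by simp
        have spl: "(\<Sum>g\<in>E. pl g) \<le> sum l' E - \<Delta>"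
        proof -
          have "(\<Sum>g\<in>E. pl g) = pl g0 + (\<Sum>g\<in>E - {g0}. pl g)" using sum.remove[OF finE g0(1)] .
          moreover have "sum l' E = l' g0 + (\<Sum>g\<in>E - {g0}. l' g)" using sum.remove[OF finE g0(1)] .
          moreover have "(\<Sum>g\<in>E - {g0}. pl g) \<le> (\<Sum>g\<in>E - {g0}. l' g)" using Q by (intro sum_mono) auto
          ultimately show ?thesis using pl_g0 by linarith
        qed
        have piA: "\<pi> ` A \<subseteq> VGc"
        proof
          fix z assume "z \<in> \<pi> ` A"
          then obtain y where y: "y \<in> A" "z = \<pi> y" by blast
          then have "y \<in> VHc" "y \<in> verts H" using AVc AH by auto
          then show "z \<in> VGc" using y(2) own unfolding \<pi>_def by auto
        qed
        have finA: "finite A" using AH gH unfolding graph_def by (meson finite_subset)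
        have cpA: "card (\<pi> ` A) \<le> k" using card_image_le[OF finA, of \<pi>] cA by linarith
        have eqk: "sd G l (\<pi> ` A) = sd G' l (\<pi> ` A)" using kg piA VGc_sub cpA unfolding k_geodesic_def by blast
        have piAP: "\<pi> ` A \<subseteq> PV" using AV unfolding PV_def by blast
        have le1: "sd G' l (\<pi> ` A) \<le> ereal (sum l PE)" by (rule sd_le_csub[OF gG' Pc piAP])
        then have fin: "sd G l (\<pi> ` A) \<noteq> \<infinity>" using eqk by auto
        obtain VT ET where T: "csub G VT ET" "\<pi> ` A \<subseteq> VT" "sd G l (\<pi> ` A) = ereal (sum l ET)"
          using sd_attain[OF gG fin] by (elim exE conjE)
        have sET: "sum l ET \<le> sum l PE"
        proof -
          have "sd G l (\<pi> ` A) \<le> ereal (sum l PE)" using le1 by (simp only: eqk)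
          then show ?thesis by (simp add: T(3))
        qed
        have aT: "\<pi> a \<in> VT" "\<pi> a \<in> VGc" using T(2) piA a by auto
        have VTc: "VT \<subseteq> VGc" by (rule csub_closed[OF T(1) closed_VGc aT])
        obtain LV LE where L: "csub H LV LE" "(\<Union>v\<in>VT. B' v) \<subseteq> LV" "sum l' LE \<le> sum l ET + \<Delta>"
          using liftH[OF T(1) VTc] by (elim exE conjE)
        have ALV: "A \<subseteq> LV"
        proof
          fix y assume y: "y \<in> A"
          then have "y \<in> VHc" "y \<in> verts H" using AVc AH by auto
          then have "own y \<in> VT" "y \<in> B' (own y)" using own T(2) y unfolding \<pi>_def by auto
          then show "y \<in> LV" using L(2) by blast
        qed
        have "sd H l' A \<le> ereal (sum l' LE)" by (rule sd_le_csub[OF gH L(1) ALV])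
        also have "\<dots> \<le> ereal (sum l' E)" using L(3) sET sPE spl by simp
        finally show ?thesis .
      qed
    qed
  qed
  show "sd H l' A = sd H' l' A" using ge le by (rule antisym[rotated])
qed

lemma liftG':
  assumes cs: "csub G' VT ET" and VT: "VT \<subseteq> VC"
  shows "\<exists>LV LE. csub H' LV LE \<and> \<iota> ` VT \<subseteq> LV \<and> sum l' LE \<le> sum l ET + \<delta> * Cc G G' H"
proof -
  define RV where "RV x = (if x \<in> verts G then B' x else {x + Nv})" for x
  define RE where "RE x = (if x \<in> verts G then I x else {})" for x
  define QV where "QV e = (if e \<in> edges G then EPV e else ends H' (e + Ne))" for e
  define QE where "QE e = (if e \<in> edges G then EPE e else {e + Ne})" for e
  have ET: "ET \<subseteq> edges G'" "\<forall>e\<in>ET. ends G' e \<subseteq> VT" using cs unfolding csub_def by auto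
  have fin: "finite VT" "finite ET" using csub_finite[OF gG' cs] by auto
  have R: "csub H' (RV x) (RE x) \<and> \<iota> x \<in> RV x \<and> sum l' (RE x) \<le> \<delta> * card (edges H)" if x: "x \<in> VT" for x
  proof (cases "x \<in> verts G")
    case True
    then have xc: "x \<in> VGc" using VC_G x VT by blast
    then show ?thesis using csub_mono[OF Hsub csub_I[OF xc]] r_B'[OF xc] sum_I[OF xc] True
      unfolding RV_def RE_def \<iota>_def by simp
  next
    case False
    then have "x \<in> newV" using x VT unfolding newV_def by blast
    then have "x + Nv \<in> verts H'" unfolding H'_def by simp
    then show ?thesis using csub_single[of "x + Nv" H'] False dpos unfolding RV_def RE_def \<iota>_def by simp
  qed
  have Q: "csub H' (QV e) (QE e) \<and> \<iota> ` ends G' e \<subseteq> QV e \<and> sum l' (QE e) \<le> l e + (\<Delta> + \<delta> + 2*\<delta>*card (edges H))"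
    if e: "e \<in> ET" for e
  proof (cases "e \<in> edges G")
    case True
    have eq: "ends G' e = ends G e" using sub True unfolding subgraph_def by auto
    have sVC: "ends G e \<subseteq> VC" using eq ET e VT by blast
    have sG: "ends G e \<subseteq> verts G" using gG True unfolding graph_def by blast
    have sc: "ends G e \<subseteq> VGc" using sVC sG VC_G by blast
    have ii: "\<iota> ` ends G' e = r ` ends G e" using eq sG unfolding \<iota>_def by (auto simp: image_def)
    show ?thesis using EP[OF True sc] csub_mono[OF Hsub] ii True Delta_nn unfolding QV_def QE_def by force
  next
    case False
    have ne: "e \<in> newE" using False e ET VT unfolding newE_def by blast
    have ne': "e + Ne \<in> edges H'" "ends H' (e + Ne) = \<iota> ` ends G' e" "l' (e + Ne) = l e + \<Delta>"
      using new_edge[OF ne] by auto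
    show ?thesis using csub_edge[OF gH' ne'(1)] ne' False dpos unfolding QV_def QE_def by simp
  qed
  have P: "csub H' ((\<Union>x\<in>VT. RV x) \<union> (\<Union>e\<in>ET. QV e)) ((\<Union>x\<in>VT. RE x) \<union> (\<Union>e\<in>ET. QE e))
     \<and> sum l' ((\<Union>x\<in>VT. RE x) \<union> (\<Union>e\<in>ET. QE e)) \<le> (\<Sum>x\<in>VT. sum l' (RE x)) + (\<Sum>e\<in>ET. sum l' (QE e))"
  proof -
    have R': "\<forall>x\<in>VT. csub H' (RV x) (RE x) \<and> \<iota> x \<in> RV x" using R by blast
    have Q': "\<forall>e\<in>ET. csub H' (QV e) (QE e) \<and> \<iota> ` ends G' e \<subseteq> QV e" using Q by blast
    show ?thesis by (rule proj_mk[OF gG' gH' cs R' Q' nn_H'])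
  qed
  have b1: "(\<Sum>x\<in>VT. sum l' (RE x)) \<le> real (card VT) * (\<delta> * card (edges H))"
    using sum_bounded_above[of VT "\<lambda>x. sum l' (RE x)" "\<delta> * card (edges H)"] R by auto
  have b2: "(\<Sum>e\<in>ET. sum l' (QE e)) \<le> (\<Sum>e\<in>ET. l e + (\<Delta> + \<delta> + 2*\<delta>*card (edges H)))"
    using Q by (intro sum_mono) auto
  have b3: "(\<Sum>e\<in>ET. l e + (\<Delta> + \<delta> + 2*\<delta>*card (edges H))) = sum l ET + real (card ET) * (\<Delta> + \<delta> + 2*\<delta>*card (edges H))"
    by (simp add: sum.distrib)
  have cV: "card VT \<le> card (verts G')" using VT VC_G' gG' unfolding graph_def by (meson card_mono subset_trans)
  have cE: "card ET \<le> card (edges G')" using ET gG' unfolding graph_def by (meson card_mono)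
  have m1: "real (card VT) * (\<delta> * card (edges H)) \<le> real (card (verts G')) * (\<delta> * card (edges H))"
    by (rule mult_right_mono) (use cV dpos in auto)
  have m2: "real (card ET) * (\<Delta> + \<delta> + 2*\<delta>*card (edges H)) \<le> real (card (edges G')) * (\<Delta> + \<delta> + 2*\<delta>*card (edges H))"
    by (rule mult_right_mono) (use cE dpos Delta_nn in auto)
  have D: "\<delta> * Cc G G' H = real (card (verts G')) * (\<delta> * card (edges H)) + real (card (edges G')) * (\<Delta> + \<delta> + 2*\<delta>*card (edges H))"
    unfolding Cc_def \<Delta>_def by (simp add: algebra_simps)
  have "sum l' ((\<Union>x\<in>VT. RE x) \<union> (\<Union>e\<in>ET. QE e)) \<le> sum l ET + \<delta> * Cc G G' H"
    using P b1 b2 b3 m1 m2 D by linarith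
  moreover have "\<iota> ` VT \<subseteq> (\<Union>x\<in>VT. RV x) \<union> (\<Union>e\<in>ET. QV e)" using R by blast
  ultimately show ?thesis using P by blast
qed

lemma main_bound:
  assumes inH: "in_H k H" and A0: "A0 \<subseteq> VGc" and cs: "csub G' VT ET" and AVT: "A0 \<subseteq> VT" and VT: "VT \<subseteq> VC"
  shows "sd G l A0 \<le> ereal (sum l ET + \<delta> * Cc G G' H)"
proof -
  have all: "\<forall>G2 l2. graph G2 \<and> subgraph H G2 \<and> length_function G2 l2 \<and> k_geodesic k G2 l2 H \<longrightarrow> fully_geodesic G2 l2 H"
    using inH unfolding in_H_def by (rule conjunct2)
  have fg: "fully_geodesic H' l' H" using all[rule_format, of H' l'] gH' Hsub lf' kgeo by blast
  have rA: "r ` A0 \<subseteq> verts H" using A0 r_VHc VHc_H by blast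
  have eq: "sd H l' (r ` A0) = sd H' l' (r ` A0)"
    using fg rA unfolding fully_geodesic_def k_geodesic_def by blast
  obtain LV LE where L: "csub H' LV LE" "\<iota> ` VT \<subseteq> LV" "sum l' LE \<le> sum l ET + \<delta> * Cc G G' H"
    using liftG'[OF cs VT] by (elim exE conjE)
  have rL: "r ` A0 \<subseteq> LV"
  proof
    fix z assume "z \<in> r ` A0"
    then obtain a where a: "a \<in> A0" "z = r a" by blast
    then have "a \<in> verts G" using A0 VGc_sub by blast
    then have "\<iota> a = r a" unfolding \<iota>_def by simp
    moreover have "\<iota> a \<in> \<iota> ` VT" using AVT a(1) by blast
    ultimately show "z \<in> LV" using L(2) a(2) by auto
  qed
  have "sd G l A0 \<le> sd H l' (r ` A0)" by (rule projHG[OF A0])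
  also have "\<dots> = sd H' l' (r ` A0)" by (rule eq)
  also have "\<dots> \<le> ereal (sum l' LE)" by (rule sd_le_csub[OF gH' L(1) rL])
  also have "\<dots> \<le> ereal (sum l ET + \<delta> * Cc G G' H)" using L(3) by simp
  finally show ?thesis .
qed

end

theorem theorem6p1:
  fixes k :: nat and H G :: "(nat, nat) mgraph"
  assumes "k \<ge> 2" and "in_H k H" and "minor G H"
  shows "in_H k G"
proof -
  have gH: "graph H" using assms(2) unfolding in_H_def by (rule conjunct1)
  have mG: "graph G \<and> graph H \<and>
     (\<exists>(B :: nat \<Rightarrow> nat set) (f :: nat \<Rightarrow> nat).
        (\<forall>v\<in>verts G. B v \<noteq> {} \<and> B v \<subseteq> verts H \<and> connected_graph (induced H (B v))) \<and>
        (\<forall>u\<in>verts G. \<forall>v\<in>verts G. u \<noteq> v \<longrightarrow> B u \<inter> B v = {}) \<and>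
        inj_on f (edges G) \<and>
        (\<forall>e\<in>edges G. f e \<in> edges H \<and>
           (\<exists>u v a b. ends G e = {u, v} \<and> ends H (f e) = {a, b} \<and> a \<in> B u \<and> b \<in> B v)))"
    using assms(3) unfolding minor_def .
  then have gG: "graph G" by (rule conjunct1)
  obtain B f where Bp: "\<forall>v\<in>verts G. B v \<noteq> {} \<and> B v \<subseteq> verts H \<and> connected_graph (induced H (B v))"
     and Bd: "\<forall>u\<in>verts G. \<forall>v\<in>verts G. u \<noteq> v \<longrightarrow> B u \<inter> B v = {}"
     and fe: "\<forall>e\<in>edges G. f e \<in> edges H \<and> (\<exists>u v a b. ends G e = {u,v} \<and> ends H (f e) = {a,b} \<and> a \<in> B u \<and> b \<in> B v)"
    using mG by (elim conjE exE)
  show ?thesis unfolding in_H_def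
  proof (intro conjI allI impI)
    show "graph G" by (rule gG)
    fix G' l assume a: "graph G' \<and> subgraph G G' \<and> length_function G' l \<and> k_geodesic k G' l G"
    then have gG': "graph G'" and sub: "subgraph G G'" and lf: "length_function G' l" and kg: "k_geodesic k G' l G"
      by auto
    show "fully_geodesic G' l G" unfolding fully_geodesic_def k_geodesic_def
    proof (intro allI impI, elim conjE)
      fix k' A0 assume A0: "A0 \<subseteq> verts G" "card A0 \<le> k'"
      have ge: "sd G' l A0 \<le> sd G l A0"
      proof (rule sd_ge_csub)
        fix V E assume "csub G V E" "A0 \<subseteq> V"
        then show "sd G' l A0 \<le> ereal (sum l E)" using sd_le_csub[OF gG' csub_mono[OF sub]] by blast
      qed
      have le: "sd G l A0 \<le> sd G' l A0"
      proof (cases "sd G' l A0 = \<infinity>")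
        case True then show ?thesis by simp
      next
        case False
        obtain VT ET where T: "csub G' VT ET" "A0 \<subseteq> VT" "sd G' l A0 = ereal (sum l ET)"
          using sd_attain[OF gG' False] by (elim exE conjE)
        have nnET: "0 \<le> sum l ET"
        proof (rule sum_nonneg)
          fix e assume "e \<in> ET"
          then have "e \<in> edges G'" using T(1) unfolding csub_def by blast
          then show "0 \<le> l e" using lf unfolding length_function_def by (simp add: less_imp_le)
        qed
        show ?thesis
        proof (cases "A0 = {}")
          case True
          have "sd G l {} \<le> ereal (sum l {})" using sd_le_csub[OF gG csub_empty] by simp
          then show ?thesis using True T(3) nnET by (simp add: order_trans)
        next
          case False
          then obtain a0 where a0: "a0 \<in> A0" by blast
          have a0G: "a0 \<in> verts G" using a0 A0(1) by blast
          have mc: "mcon k H G G' l B f a0"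
            by (rule mcon.intro[OF assms(1) gH gG gG' Bp Bd fe sub lf kg a0G])
          interpret M: mcon k H G G' l B f a0 by (rule mc)
          have clVC: "\<forall>g\<in>edges G'. ends G' g \<inter> M.VC \<noteq> {} \<longrightarrow> ends G' g \<subseteq> M.VC"
            by (rule closed_step[OF gG']) (rule M.VC_step)
          have a0V: "a0 \<in> VT" "a0 \<in> M.VC" using a0 T(2) unfolding M.VC_def by auto
          have VT: "VT \<subseteq> M.VC" by (rule csub_closed[OF T(1) clVC a0V])
          have A0c: "A0 \<subseteq> M.VGc"
          proof
            fix x assume "x \<in> A0"
            then show "x \<in> M.VGc" using M.VC_G VT T(2) A0(1) by blast
          qed
          have "sd G l A0 \<le> sd G' l A0 + ereal e" if e: "0 < e" for e
          proof -
            define \<delta> where "\<delta> = e / (Cc G G' H + 1)"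
            have C0: "0 \<le> Cc G G' H" by (rule Cc_nn)
            have dpos: "0 < \<delta>" unfolding \<delta>_def using e C0 by simp
            have m2: "mcon2 k H G G' l B f a0 \<delta>"
              by (rule mcon2.intro[OF mc]) (rule mcon2_axioms.intro[OF dpos])
            have b: "sd G l A0 \<le> ereal (sum l ET + \<delta> * Cc G G' H)"
              by (rule mcon2.main_bound[OF m2 assms(2) A0c T(1) T(2) VT])
            have "\<delta> * Cc G G' H \<le> e"
            proof -
              have "\<delta> * Cc G G' H = e * (Cc G G' H / (Cc G G' H + 1))" unfolding \<delta>_def by simp
              also have "\<dots> \<le> e * 1" using e C0 by (intro mult_left_mono) auto
              finally show ?thesis by simp
            qed
            then have "ereal (sum l ET + \<delta> * Cc G G' H) \<le> sd G' l A0 + ereal e" using T(3) by simp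
            then show ?thesis using b by (rule order_trans[rotated])
          qed
          then show ?thesis by (rule ereal_le_epsilon2)
        qed
      qed
      show "sd G l A0 = sd G' l A0" using le ge by (rule antisym)
    qed
  qed
qed

end
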